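(* Let $M_{z_1},M_{z_2}$ be the coordinate multiplication operators on the Hardy space $H^2(\mathbb D^2)$ of the bidisc. Then the triple $\left(\tfrac{M_{z_1}-M_{z_2}}{2},\ M_{z_1}+M_{z_2},\ M_{z_1}M_{z_2}\right)$ is a pure $\mathcal P$-isometry.
   Context: The pentablock is $\mathcal P=\{(a_{21},\operatorname{tr}A,\det A): A\in M_2(\mathbb C),\ \|A\|<1\}$; $\Gamma$ is the closure of the symmetrized bidisc $\{(\operatorname{tr}A,\det A):\|A\|<1\}$, $b\Gamma=\{(s,p)\in\Gamma: s=\bar sp,\ |p|=1\}$, and $b\mathcal P=\{(a,s,p):(s,p)\in b\Gamma,\ |a|^2=1-|s|^2/4\}$. A $\mathcal P$-unitary is a triple of commuting normal operators with Taylor joint spectrum in $b\mathcal P$. A $\mathcal P$-isometry is the restriction of a $\mathcal P$-unitary to a joint invariant subspace. A pure $\mathcal P$-isometry is a $\mathcal P$-isometry $(V_1,V_2,V_3)$ with $V_3$ a pure isometry, i.e. $V_3^{*n}\to0$ strongly. *)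

theory Defs
  imports "HOL-Analysis.Analysis"
begin

definition l2 :: "('i \<Rightarrow> complex) set" where
  "l2 = {f. (\<lambda>i. (cmod (f i))\<^sup>2) summable_on UNIV}"

definition l2_inner :: "('i \<Rightarrow> complex) \<Rightarrow> ('i \<Rightarrow> complex) \<Rightarrow> complex" where
  "l2_inner f g = (\<Sum>\<^sub>\<infinity>i. f i * cnj (g i))"

definition l2_norm :: "('i \<Rightarrow> complex) \<Rightarrow> real" where
  "l2_norm f = sqrt (\<Sum>\<^sub>\<infinity>i. (cmod (f i))\<^sup>2)"

type_synonym 'i op = "('i \<Rightarrow> complex) \<Rightarrow> ('i \<Rightarrow> complex)"

text \<open>Bounded linear operators on l2(I) (only their action on l2 matters).\<close>
definition bounded_op :: "'i op \<Rightarrow> bool" where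
  "bounded_op T \<longleftrightarrow>
     (\<forall>f\<in>l2. T f \<in> l2) \<and>
     (\<forall>f\<in>l2. \<forall>g\<in>l2. \<forall>c. T (\<lambda>i. c * f i + g i) = (\<lambda>i. c * T f i + T g i)) \<and>
     (\<exists>C. \<forall>f\<in>l2. l2_norm (T f) \<le> C * l2_norm f)"

definition is_adjoint :: "'i op \<Rightarrow> 'i op \<Rightarrow> bool" where
  "is_adjoint T S \<longleftrightarrow> bounded_op S \<and>
     (\<forall>f\<in>l2. \<forall>g\<in>l2. l2_inner (T f) g = l2_inner f (S g))"

definition commute_op :: "'i op \<Rightarrow> 'i op \<Rightarrow> bool" where
  "commute_op T S \<longleftrightarrow> (\<forall>f\<in>l2. T (S f) = S (T f))"

definition normal_op :: "'i op \<Rightarrow> bool" where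
  "normal_op T \<longleftrightarrow> bounded_op T \<and> (\<exists>S. is_adjoint T S \<and> commute_op T S)"

definition isometry_op :: "'i op \<Rightarrow> bool" where
  "isometry_op T \<longleftrightarrow> bounded_op T \<and> (\<forall>f\<in>l2. l2_norm (T f) = l2_norm f)"

definition pure_isometry :: "'i op \<Rightarrow> bool" where
  "pure_isometry V \<longleftrightarrow> isometry_op V \<and>
     (\<exists>S. is_adjoint V S \<and> (\<forall>f\<in>l2. (\<lambda>n. l2_norm ((S ^^ n) f)) \<longlonglongrightarrow> 0))"

text \<open>Koszul complex of (T1,T2,T3) on H:
  0 \<rightarrow> H \<rightarrow> H^3 \<rightarrow> H^3 \<rightarrow> H \<rightarrow> 0 with
  d1 x = (T1 x, T2 x, T3 x),
  d2 (x1,x2,x3) = (T2 x3 - T3 x2, T3 x1 - T1 x3, T1 x2 - T2 x1),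
  d3 (y1,y2,y3) = T1 y1 + T2 y2 + T3 y3.
  The triple is (Taylor) non-singular iff this complex is exact.\<close>

definition vadd :: "('i \<Rightarrow> complex) \<Rightarrow> ('i \<Rightarrow> complex) \<Rightarrow> ('i \<Rightarrow> complex)" where
  "vadd f g = (\<lambda>i. f i + g i)"

definition vsub :: "('i \<Rightarrow> complex) \<Rightarrow> ('i \<Rightarrow> complex) \<Rightarrow> ('i \<Rightarrow> complex)" where
  "vsub f g = (\<lambda>i. f i - g i)"

definition vzero :: "'i \<Rightarrow> complex" where
  "vzero = (\<lambda>i. 0)"

definition koszul_exact :: "'i op \<Rightarrow> 'i op \<Rightarrow> 'i op \<Rightarrow> bool" where
  "koszul_exact T1 T2 T3 \<longleftrightarrow>
     (\<forall>x\<in>l2. T1 x = vzero \<and> T2 x = vzero \<and> T3 x = vzero \<longrightarrow> x = vzero) \<and>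
     (\<forall>x1\<in>l2. \<forall>x2\<in>l2. \<forall>x3\<in>l2.
        vsub (T2 x3) (T3 x2) = vzero \<and> vsub (T3 x1) (T1 x3) = vzero \<and> vsub (T1 x2) (T2 x1) = vzero \<longrightarrow>
        (\<exists>y\<in>l2. x1 = T1 y \<and> x2 = T2 y \<and> x3 = T3 y)) \<and>
     (\<forall>y1\<in>l2. \<forall>y2\<in>l2. \<forall>y3\<in>l2.
        vadd (vadd (T1 y1) (T2 y2)) (T3 y3) = vzero \<longrightarrow>
        (\<exists>x1\<in>l2. \<exists>x2\<in>l2. \<exists>x3\<in>l2.
           y1 = vsub (T2 x3) (T3 x2) \<and> y2 = vsub (T3 x1) (T1 x3) \<and> y3 = vsub (T1 x2) (T2 x1))) \<and>
     (\<forall>z\<in>l2. \<exists>y1\<in>l2. \<exists>y2\<in>l2. \<exists>y3\<in>l2. z = vadd (vadd (T1 y1) (T2 y2)) (T3 y3))"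

definition shift_op :: "'i op \<Rightarrow> complex \<Rightarrow> 'i op" where
  "shift_op T c = (\<lambda>f i. T f i - c * f i)"

definition taylor_spectrum :: "'i op \<Rightarrow> 'i op \<Rightarrow> 'i op \<Rightarrow> (complex \<times> complex \<times> complex) set" where
  "taylor_spectrum T1 T2 T3 =
     {(a, s, p). \<not> koszul_exact (shift_op T1 a) (shift_op T2 s) (shift_op T3 p)}"

definition mat_tr :: "complex^2^2 \<Rightarrow> complex" where
  "mat_tr A = A $ 1 $ 1 + A $ 2 $ 2"

definition symmetrized_bidisc :: "(complex \<times> complex) set" where
  "symmetrized_bidisc = {(mat_tr A, det A) | A. onorm (\<lambda>x. A *v x) < 1}"

definition Gamma :: "(complex \<times> complex) set" where
  "Gamma = closure symmetrized_bidisc"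

definition bGamma :: "(complex \<times> complex) set" where
  "bGamma = {(s, p). (s, p) \<in> Gamma \<and> s = cnj s * p \<and> cmod p = 1}"

definition bP :: "(complex \<times> complex \<times> complex) set" where
  "bP = {(a, s, p). (s, p) \<in> bGamma \<and> (cmod a)\<^sup>2 = 1 - (cmod s)\<^sup>2 / 4}"

definition P_unitary :: "'i op \<Rightarrow> 'i op \<Rightarrow> 'i op \<Rightarrow> bool" where
  "P_unitary U1 U2 U3 \<longleftrightarrow>
     normal_op U1 \<and> normal_op U2 \<and> normal_op U3 \<and>
     commute_op U1 U2 \<and> commute_op U1 U3 \<and> commute_op U2 U3 \<and>
     taylor_spectrum U1 U2 U3 \<subseteq> bP"

text \<open>(V1,V2,V3) on l2(J) is the restriction of a P-unitary on l2(K) to a joint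
  invariant subspace: there is an isometric linear embedding E of l2(J) into l2(K)
  with U_i (E f) = E (V_i f).\<close>
definition P_isometry_in :: "'k itself \<Rightarrow> 'j op \<Rightarrow> 'j op \<Rightarrow> 'j op \<Rightarrow> bool" where
  "P_isometry_in _ V1 V2 V3 \<longleftrightarrow>
     (\<exists>(E :: ('j \<Rightarrow> complex) \<Rightarrow> ('k \<Rightarrow> complex)) U1 U2 U3.
        P_unitary U1 U2 U3 \<and>
        (\<forall>f\<in>l2. E f \<in> l2 \<and> l2_norm (E f) = l2_norm f) \<and>
        (\<forall>f\<in>l2. \<forall>g\<in>l2. \<forall>c. E (\<lambda>i. c * f i + g i) = (\<lambda>i. c * E f i + E g i)) \<and>
        (\<forall>f\<in>l2. U1 (E f) = E (V1 f) \<and> U2 (E f) = E (V2 f) \<and> U3 (E f) = E (V3 f)))"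

definition pure_P_isometry_in :: "'k itself \<Rightarrow> 'j op \<Rightarrow> 'j op \<Rightarrow> 'j op \<Rightarrow> bool" where
  "pure_P_isometry_in K V1 V2 V3 \<longleftrightarrow> P_isometry_in K V1 V2 V3 \<and> pure_isometry V3"

text \<open>f = \<Sum> c(m,n) z1^m z2^n \<in> H^2(D^2) is identified with its coefficient family c.\<close>
definition Mz1 :: "(nat \<times> nat) op" where
  "Mz1 f = (\<lambda>(m, n). if m = 0 then 0 else f (m - 1, n))"

definition Mz2 :: "(nat \<times> nat) op" where
  "Mz2 f = (\<lambda>(m, n). if n = 0 then 0 else f (m, n - 1))"

end

theory Submission
  imports Defs "HOL-Real_Asymp.Real_Asymp"
begin

lemma l2_iff: "f \<in> l2 \<longleftrightarrow> (\<lambda>i. (cmod (f i))\<^sup>2) summable_on UNIV"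
  by (simp add: l2_def)

lemma l2_norm_sq: "(l2_norm f)\<^sup>2 = (\<Sum>\<^sub>\<infinity>i. (cmod (f i))\<^sup>2)"
  unfolding l2_norm_def by (simp add: infsum_nonneg)

lemma l2_norm_nonneg: "l2_norm f \<ge> 0"
  unfolding l2_norm_def by (simp add: infsum_nonneg)

lemma l2_point: assumes "f \<in> l2" shows "(cmod (f i))\<^sup>2 \<le> (l2_norm f)\<^sup>2"
proof -
  have "sum (\<lambda>i. (cmod (f i))\<^sup>2) {i} \<le> (\<Sum>\<^sub>\<infinity>i. (cmod (f i))\<^sup>2)"
    by (rule finite_sum_le_infsum) (use assms in \<open>auto simp: l2_iff\<close>)
  then show ?thesis by (simp add: l2_norm_sq)
qed

lemma l2_point_le: assumes "f \<in> l2" shows "cmod (f i) \<le> l2_norm f"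
  using l2_point[OF assms] l2_norm_nonneg power2_le_imp_le by blast

lemma sq_ineq: "(cmod (a*x + b*y))\<^sup>2 \<le> 2*(cmod a)\<^sup>2*(cmod x)\<^sup>2 + 2*(cmod b)\<^sup>2*(cmod y)\<^sup>2"
proof -
  have "cmod (a*x + b*y) \<le> cmod a * cmod x + cmod b * cmod y"
    by (metis norm_mult norm_triangle_ineq)
  hence "(cmod (a*x + b*y))\<^sup>2 \<le> (cmod a * cmod x + cmod b * cmod y)\<^sup>2"
    by (simp add: power_mono)
  also have "\<dots> \<le> 2*(cmod a)\<^sup>2*(cmod x)\<^sup>2 + 2*(cmod b)\<^sup>2*(cmod y)\<^sup>2"
  proof -
    have "0 \<le> (cmod a * cmod x - cmod b * cmod y)\<^sup>2" by simp
    thus ?thesis by (simp add: power2_eq_square algebra_simps)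
  qed
  finally show ?thesis .
qed

lemma real_summable_cmp:
  fixes g h :: "'a \<Rightarrow> real"
  assumes "h summable_on A" "\<And>x. x\<in>A \<Longrightarrow> 0 \<le> g x" "\<And>x. x\<in>A \<Longrightarrow> g x \<le> h x"
  shows "g summable_on A"
  by (rule summable_on_comparison_test[OF assms(1) assms(3) assms(2)])

lemma l2_comb:
  assumes f: "f \<in> l2" and g: "g \<in> l2"
  shows "(\<lambda>i. a*f i + b*g i) \<in> l2"
    and "(l2_norm (\<lambda>i. a*f i + b*g i))\<^sup>2 \<le> 2*(cmod a)\<^sup>2*(l2_norm f)\<^sup>2 + 2*(cmod b)\<^sup>2*(l2_norm g)\<^sup>2"
proof -
  have sf: "(\<lambda>i. (cmod (f i))\<^sup>2) summable_on UNIV" and sg: "(\<lambda>i. (cmod (g i))\<^sup>2) summable_on UNIV"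
    using f g by (auto simp: l2_iff)
  have sh: "(\<lambda>i. 2*(cmod a)\<^sup>2*(cmod (f i))\<^sup>2 + 2*(cmod b)\<^sup>2*(cmod (g i))\<^sup>2) summable_on UNIV"
    using summable_on_add[OF summable_on_cmult_right[OF sf, of "2*(cmod a)\<^sup>2"] summable_on_cmult_right[OF sg, of "2*(cmod b)\<^sup>2"]]
    by simp
  have s: "(\<lambda>i. (cmod (a*f i + b*g i))\<^sup>2) summable_on UNIV"
    by (rule real_summable_cmp[OF sh]) (auto intro: sq_ineq)
  thus "(\<lambda>i. a*f i + b*g i) \<in> l2" by (simp add: l2_iff)
  have "(l2_norm (\<lambda>i. a*f i + b*g i))\<^sup>2 \<le> (\<Sum>\<^sub>\<infinity>i. 2*(cmod a)\<^sup>2*(cmod (f i))\<^sup>2 + 2*(cmod b)\<^sup>2*(cmod (g i))\<^sup>2)"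
    unfolding l2_norm_sq by (rule infsum_mono[OF s sh]) (rule sq_ineq)
  also have "\<dots> = 2*(cmod a)\<^sup>2*(l2_norm f)\<^sup>2 + 2*(cmod b)\<^sup>2*(l2_norm g)\<^sup>2"
    using infsum_add[OF summable_on_cmult_right[OF sf, of "2*(cmod a)\<^sup>2"] summable_on_cmult_right[OF sg, of "2*(cmod b)\<^sup>2"]]
      infsum_cmult_right[OF sf, of "2*(cmod a)\<^sup>2"] infsum_cmult_right[OF sg, of "2*(cmod b)\<^sup>2"]
    by (simp add: l2_norm_sq)
  finally show "(l2_norm (\<lambda>i. a*f i + b*g i))\<^sup>2 \<le> 2*(cmod a)\<^sup>2*(l2_norm f)\<^sup>2 + 2*(cmod b)\<^sup>2*(l2_norm g)\<^sup>2" .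
qed

lemma l2_comp_bij:
  assumes "bij s"
  shows "(\<lambda>i. f (s i)) \<in> l2 \<longleftrightarrow> f \<in> l2" and "l2_norm (\<lambda>i. f (s i)) = l2_norm f"
proof -
  have b: "bij_betw s UNIV UNIV" using assms by (simp add: bij_def)
  show "(\<lambda>i. f (s i)) \<in> l2 \<longleftrightarrow> f \<in> l2"
    unfolding l2_iff using summable_on_reindex_bij_betw[OF b, of "\<lambda>j. (cmod (f j))\<^sup>2"] by simp
  show "l2_norm (\<lambda>i. f (s i)) = l2_norm f"
    unfolding l2_norm_def using infsum_reindex_bij_betw[OF b, of "\<lambda>j. (cmod (f j))\<^sup>2"] by simp
qed

lemma l2_zero: "(\<lambda>i. 0) \<in> l2" by (simp add: l2_iff)
lemma l2_vzero: "vzero \<in> l2" by (simp add: l2_iff vzero_def)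

lemma inner_summable:
  assumes f: "f \<in> l2" and g: "g \<in> l2"
  shows "(\<lambda>i. f i * cnj (g i)) summable_on UNIV"
proof -
  have sh: "(\<lambda>i. (cmod (f i))\<^sup>2 + (cmod (g i))\<^sup>2) summable_on UNIV"
    using f g by (auto simp: l2_iff intro: summable_on_add)
  have "(\<lambda>i. norm (f i * cnj (g i))) summable_on UNIV"
  proof (rule Infinite_Sum.abs_summable_on_comparison_test'[OF sh])
    fix i
    have "cmod (f i) * cmod (g i) \<le> (cmod (f i))\<^sup>2 + (cmod (g i))\<^sup>2"
      using sum_squares_bound[of "cmod (f i)" "cmod (g i)"] mult_nonneg_nonneg[of "cmod (f i)" "cmod (g i)", OF norm_ge_zero norm_ge_zero] by linarith
    thus "norm (f i * cnj (g i)) \<le> (cmod (f i))\<^sup>2 + (cmod (g i))\<^sup>2"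
      by (simp add: norm_mult)
  qed
  thus ?thesis by (rule Infinite_Sum.abs_summable_summable)
qed

lemma inner_left:
  assumes "f \<in> l2" "g \<in> l2" "h \<in> l2"
  shows "l2_inner (\<lambda>i. a*f i + b*g i) h = a * l2_inner f h + b * l2_inner g h"
proof -
  have 1: "(\<lambda>i. f i * cnj (h i)) summable_on UNIV" "(\<lambda>i. g i * cnj (h i)) summable_on UNIV"
    using assms inner_summable by auto
  have "l2_inner (\<lambda>i. a*f i + b*g i) h = (\<Sum>\<^sub>\<infinity>i. a*(f i * cnj (h i)) + b*(g i * cnj (h i)))"
    unfolding l2_inner_def by (simp add: algebra_simps)
  also have "\<dots> = a * l2_inner f h + b * l2_inner g h"
    using infsum_add[OF summable_on_cmult_right[OF 1(1)] summable_on_cmult_right[OF 1(2)]]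
      infsum_cmult_right[OF 1(1)] infsum_cmult_right[OF 1(2)] by (simp add: l2_inner_def)
  finally show ?thesis .
qed

lemma inner_right:
  assumes "f \<in> l2" "g \<in> l2" "h \<in> l2"
  shows "l2_inner h (\<lambda>i. a*f i + b*g i) = cnj a * l2_inner h f + cnj b * l2_inner h g"
proof -
  have 1: "(\<lambda>i. h i * cnj (f i)) summable_on UNIV" "(\<lambda>i. h i * cnj (g i)) summable_on UNIV"
    using assms inner_summable by auto
  have "l2_inner h (\<lambda>i. a*f i + b*g i) = (\<Sum>\<^sub>\<infinity>i. cnj a*(h i * cnj (f i)) + cnj b*(h i * cnj (g i)))"
    unfolding l2_inner_def by (simp add: algebra_simps)
  also have "\<dots> = cnj a * l2_inner h f + cnj b * l2_inner h g"
    using infsum_add[OF summable_on_cmult_right[OF 1(1)] summable_on_cmult_right[OF 1(2)]]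
      infsum_cmult_right[OF 1(1)] infsum_cmult_right[OF 1(2)] by (simp add: l2_inner_def)
  finally show ?thesis .
qed

lemma inner_reindex:
  assumes "bij s"
  shows "l2_inner (\<lambda>i. f (s i)) g = l2_inner f (\<lambda>i. g (inv s i))"
proof -
  have b: "bij_betw s UNIV UNIV" using assms by (simp add: bij_def)
  have "l2_inner (\<lambda>i. f (s i)) g = (\<Sum>\<^sub>\<infinity>i. (\<lambda>j. f j * cnj (g (inv s j))) (s i))"
    unfolding l2_inner_def using assms by (simp add: bij_is_inj)
  also have "\<dots> = l2_inner f (\<lambda>i. g (inv s i))"
    unfolding l2_inner_def by (rule infsum_reindex_bij_betw[OF b])
  finally show ?thesis .
qed


section \<open>Resolvent series\<close>

definition Gop :: "('k \<Rightarrow> 'k) \<Rightarrow> complex \<Rightarrow> 'k op" where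
  "Gop t c f = (\<lambda>i. \<Sum>k. c^k * f ((t^^k) i))"

lemma G_term_bound:
  assumes "f \<in> l2"
  shows "norm (c^k * f ((t^^k) i)) \<le> (cmod c)^k * l2_norm f"
  by (simp add: norm_mult norm_power l2_point_le[OF assms] mult_left_mono)

lemma G_summable:
  assumes "cmod c < 1" "f \<in> l2"
  shows "summable (\<lambda>k. c^k * f ((t^^k) i))"
proof (rule summable_comparison_test')
  show "summable (\<lambda>k. (cmod c)^k * l2_norm f)"
    using assms(1) by (intro summable_mult2 summable_geometric) simp
  show "\<And>n. n \<ge> 0 \<Longrightarrow> norm (c^n * f ((t^^n) i)) \<le> (cmod c)^n * l2_norm f"
    by (rule G_term_bound[OF assms(2)])
qed

lemma G_lin:
  assumes "cmod c < 1" "f \<in> l2" "g \<in> l2"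
  shows "Gop t c (\<lambda>i. a*f i + g i) = (\<lambda>i. a * Gop t c f i + Gop t c g i)"
proof
  fix i
  have s1: "summable (\<lambda>k. a * (c^k * f ((t^^k) i)))"
    using G_summable[OF assms(1,2)] by (rule summable_mult)
  have s2: "summable (\<lambda>k. c^k * g ((t^^k) i))" using G_summable[OF assms(1,3)] .
  have "Gop t c (\<lambda>i. a*f i + g i) i = (\<Sum>k. a * (c^k * f ((t^^k) i)) + c^k * g ((t^^k) i))"
    unfolding Gop_def by (simp add: algebra_simps)
  also have "\<dots> = (\<Sum>k. a * (c^k * f ((t^^k) i))) + (\<Sum>k. c^k * g ((t^^k) i))"
    by (rule suminf_add[OF s1 s2, symmetric])
  also have "\<dots> = a * Gop t c f i + Gop t c g i"
    unfolding Gop_def using suminf_mult[OF G_summable[OF assms(1,2)], of a] by simp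
  finally show "Gop t c (\<lambda>i. a*f i + g i) i = a * Gop t c f i + Gop t c g i" .
qed

lemma G_tel:
  assumes "cmod c < 1" "f \<in> l2"
  shows "Gop t c (\<lambda>i. f i - c * f (t i)) = f"
proof
  fix i
  define F where "F k = c^k * f ((t^^k) i)" for k
  have F0: "F \<longlonglongrightarrow> 0"
  proof (rule Lim_null_comparison)
    show "\<forall>\<^sub>F k in sequentially. norm (F k) \<le> (cmod c)^k * l2_norm f"
      unfolding F_def by (intro always_eventually allI G_term_bound[OF assms(2)])
    show "(\<lambda>k. (cmod c)^k * l2_norm f) \<longlonglongrightarrow> 0"
      using assms(1) by (intro tendsto_mult_left_zero LIMSEQ_power_zero) simp_all
  qed
  have "(\<lambda>k. F k - F (Suc k)) sums (F 0 - 0)" by (rule telescope_sums'[OF F0])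
  moreover have "(\<lambda>k. F k - F (Suc k)) = (\<lambda>k. c^k * (f ((t^^k) i) - c * f (t ((t^^k) i))))"
    by (simp add: F_def algebra_simps)
  ultimately show "Gop t c (\<lambda>i. f i - c * f (t i)) i = f i"
    unfolding Gop_def by (simp add: F_def sums_iff)
qed

lemma funpow_comm:
  assumes "\<And>x. t (r x) = r (t x)"
  shows "(t^^k) (r x) = r ((t^^k) x)"
  by (induction k) (simp_all add: assms)

lemma G_comm:
  assumes "\<And>x. t (r x) = r (t x)"
  shows "Gop t c (\<lambda>i. f (r i)) = (\<lambda>i. Gop t c f (r i))"
proof -
  have "\<And>k x. (t^^k) (r x) = r ((t^^k) x)" by (rule funpow_comm) (rule assms)
  thus ?thesis unfolding Gop_def by simp
qed

lemma series_CS: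
  fixes x :: "nat \<Rightarrow> complex"
  assumes r: "cmod c < 1" and s: "summable (\<lambda>k. c^k * x k)"
    and h: "summable (\<lambda>k. (cmod c)^k * (cmod (x k))\<^sup>2)"
  shows "(cmod (\<Sum>k. c^k * x k))\<^sup>2 \<le> (1/(1 - cmod c)) * (\<Sum>k. (cmod c)^k * (cmod (x k))\<^sup>2)"
proof -
  define r where "r = cmod c"
  define M where "M = (1/(1 - r)) * (\<Sum>k. r^k * (cmod (x k))\<^sup>2)"
  have r0: "0 \<le> r" "r < 1" using r by (auto simp: r_def)
  have geo: "summable (\<lambda>k. r^k)" "(\<Sum>k. r^k) = 1/(1-r)" using r0 by (auto simp: suminf_geometric)
  have bnd: "(cmod (\<Sum>k<n. c^k * x k))\<^sup>2 \<le> M" for n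
  proof -
    have "cmod (\<Sum>k<n. c^k * x k) \<le> (\<Sum>k<n. r^k * cmod (x k))"
      by (rule order_trans[OF norm_sum]) (simp add: norm_mult norm_power r_def)
    hence "(cmod (\<Sum>k<n. c^k * x k))\<^sup>2 \<le> (\<Sum>k<n. r^k * cmod (x k))\<^sup>2"
      by (simp add: power_mono)
    also have "(\<Sum>k<n. r^k * cmod (x k)) = (\<Sum>k<n. sqrt (r^k) * (sqrt (r^k) * cmod (x k)))"
      by (rule sum.cong) (use r0 in \<open>auto simp: mult.assoc[symmetric]\<close>)
    also have "(\<dots>)\<^sup>2 \<le> (\<Sum>k<n. (sqrt (r^k))\<^sup>2) * (\<Sum>k<n. (sqrt (r^k) * cmod (x k))\<^sup>2)"
      by (rule Cauchy_Schwarz_ineq_sum)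
    also have "\<dots> = (\<Sum>k<n. r^k) * (\<Sum>k<n. r^k * (cmod (x k))\<^sup>2)"
      using r0 by (simp add: power_mult_distrib)
    also have "\<dots> \<le> (1/(1-r)) * (\<Sum>k. r^k * (cmod (x k))\<^sup>2)"
    proof (rule mult_mono)
      show "(\<Sum>k<n. r^k) \<le> 1/(1-r)" using sum_le_suminf[OF geo(1), of "{..<n}"] geo(2) r0 by simp
      show "(\<Sum>k<n. r^k * (cmod (x k))\<^sup>2) \<le> (\<Sum>k. r^k * (cmod (x k))\<^sup>2)"
        using sum_le_suminf[OF h[folded r_def], of "{..<n}"] r0 by simp
      show "0 \<le> 1/(1-r)" using r0 by simp
      show "0 \<le> (\<Sum>k<n. r^k * (cmod (x k))\<^sup>2)" using r0 by (intro sum_nonneg) simp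
    qed
    finally show ?thesis by (simp add: M_def)
  qed
  have "(\<lambda>n. (cmod (\<Sum>k<n. c^k * x k))\<^sup>2) \<longlonglongrightarrow> (cmod (\<Sum>k. c^k * x k))\<^sup>2"
    by (intro tendsto_intros summable_LIMSEQ s)
  hence "(cmod (\<Sum>k. c^k * x k))\<^sup>2 \<le> M"
    by (rule LIMSEQ_le_const2) (use bnd in auto)
  thus ?thesis by (simp add: M_def r_def)
qed

lemma G_l2:
  assumes c: "cmod c < 1" and t: "bij t" and f: "f \<in> l2"
  shows "Gop t c f \<in> l2"
proof -
  define r where "r = cmod c"
  have r0: "0 \<le> r" "r < 1" using c by (auto simp: r_def)
  define h where "h i = (\<Sum>k. r^k * (cmod (f ((t^^k) i)))\<^sup>2)" for i
  have sk: "summable (\<lambda>k. r^k * (cmod (f ((t^^k) i)))\<^sup>2)" for i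
  proof (rule summable_comparison_test')
    show "summable (\<lambda>k. r^k * (l2_norm f)\<^sup>2)"
      using r0 by (intro summable_mult2 summable_geometric) simp
    show "\<And>n. n \<ge> 0 \<Longrightarrow> norm (r^n * (cmod (f ((t^^n) i)))\<^sup>2) \<le> r^n * (l2_norm f)\<^sup>2"
      using r0 l2_point[OF f] by (simp add: mult_left_mono)
  qed
  have hs: "h summable_on UNIV"
  proof (rule nonneg_bdd_above_summable_on)
    show "\<And>x. x \<in> UNIV \<Longrightarrow> 0 \<le> h x" unfolding h_def using r0 by (intro suminf_nonneg sk) simp
    show "bdd_above (sum h ` {F. F \<subseteq> UNIV \<and> finite F})"
    proof (rule bdd_aboveI2)
      fix F :: "'a set" assume "F \<in> {F. F \<subseteq> UNIV \<and> finite F}"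
      hence fin: "finite F" by simp
      have inner: "(\<Sum>i\<in>F. (cmod (f ((t^^k) i)))\<^sup>2) \<le> (l2_norm f)\<^sup>2" for k
      proof -
        have inj: "inj_on (t^^k) F" by (rule inj_on_subset[OF inj_fn[OF bij_is_inj[OF t]]]) simp
        have "(\<Sum>i\<in>F. (cmod (f ((t^^k) i)))\<^sup>2) = (\<Sum>j\<in>(t^^k)`F. (cmod (f j))\<^sup>2)"
          using sum.reindex[OF inj, of "\<lambda>j. (cmod (f j))\<^sup>2"] by simp
        also have "\<dots> \<le> (\<Sum>\<^sub>\<infinity>j. (cmod (f j))\<^sup>2)"
          by (rule finite_sum_le_infsum) (use f fin in \<open>auto simp: l2_iff\<close>)
        finally show ?thesis by (simp add: l2_norm_sq)
      qed
      have "sum h F = (\<Sum>k. \<Sum>i\<in>F. r^k * (cmod (f ((t^^k) i)))\<^sup>2)"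
        unfolding h_def by (rule suminf_sum[symmetric]) (rule sk)
      also have "\<dots> \<le> (\<Sum>k. r^k * (l2_norm f)\<^sup>2)"
      proof (rule suminf_le)
        show "summable (\<lambda>k. \<Sum>i\<in>F. r^k * (cmod (f ((t^^k) i)))\<^sup>2)"
          by (rule summable_sum) (rule sk)
        show "summable (\<lambda>k. r^k * (l2_norm f)\<^sup>2)"
          using r0 by (intro summable_mult2 summable_geometric) simp
        fix k show "(\<Sum>i\<in>F. r^k * (cmod (f ((t^^k) i)))\<^sup>2) \<le> r^k * (l2_norm f)\<^sup>2"
          using inner[of k] r0 by (simp add: sum_distrib_left[symmetric] mult_left_mono)
      qed
      finally show "sum h F \<le> (\<Sum>k. r^k * (l2_norm f)\<^sup>2)" .
    qed
  qed
  have "(\<lambda>i. (cmod (Gop t c f i))\<^sup>2) summable_on UNIV"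
  proof (rule real_summable_cmp)
    show "(\<lambda>i. (1/(1-r)) * h i) summable_on UNIV" by (rule summable_on_cmult_right[OF hs])
    show "\<And>i. i \<in> UNIV \<Longrightarrow> 0 \<le> (cmod (Gop t c f i))\<^sup>2" by simp
    fix i
    show "(cmod (Gop t c f i))\<^sup>2 \<le> (1/(1-r)) * h i"
      unfolding Gop_def h_def r_def
      by (rule series_CS[OF c G_summable[OF c f]]) (use sk in \<open>simp add: r_def\<close>)
  qed
  thus ?thesis by (simp add: l2_iff)
qed


definition lmap :: "'i op \<Rightarrow> bool" where
  "lmap T \<longleftrightarrow> (\<forall>f\<in>l2. T f \<in> l2) \<and>
     (\<forall>f\<in>l2. \<forall>g\<in>l2. \<forall>c. T (\<lambda>i. c * f i + g i) = (\<lambda>i. c * T f i + T g i))"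

lemma lmap_l2: "lmap T \<Longrightarrow> f \<in> l2 \<Longrightarrow> T f \<in> l2" by (simp add: lmap_def)
lemma lmap_lin: "lmap T \<Longrightarrow> f \<in> l2 \<Longrightarrow> g \<in> l2 \<Longrightarrow> T (\<lambda>i. c * f i + g i) = (\<lambda>i. c * T f i + T g i)"
  by (simp add: lmap_def)

lemma bounded_lmap: "bounded_op T \<Longrightarrow> lmap T" by (simp add: bounded_op_def lmap_def)

lemma l2_scale: "f \<in> l2 \<Longrightarrow> (\<lambda>i. c * f i) \<in> l2"
  using l2_comb(1)[of f f c 0] by simp
lemma l2_add: "f \<in> l2 \<Longrightarrow> g \<in> l2 \<Longrightarrow> (\<lambda>i. f i + g i) \<in> l2"
  using l2_comb(1)[of f g 1 1] by simp
lemma l2_lin: "f \<in> l2 \<Longrightarrow> g \<in> l2 \<Longrightarrow> (\<lambda>i. c * f i + g i) \<in> l2"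
  using l2_comb(1)[of f g c 1] by simp
lemma l2_vadd: "f \<in> l2 \<Longrightarrow> g \<in> l2 \<Longrightarrow> vadd f g \<in> l2"
  unfolding vadd_def by (rule l2_add)
lemma l2_vsub: "f \<in> l2 \<Longrightarrow> g \<in> l2 \<Longrightarrow> vsub f g \<in> l2"
  unfolding vsub_def using l2_comb(1)[of f g 1 "-1"] by simp

lemma lmap_zero: "lmap T \<Longrightarrow> T vzero = vzero"
proof -
  assume T: "lmap T"
  have "T (\<lambda>i. (-1) * vzero i + vzero i) = (\<lambda>i. (-1) * T vzero i + T vzero i)"
    by (rule lmap_lin[OF T l2_vzero l2_vzero])
  moreover have "(\<lambda>i. (-1) * vzero i + vzero i) = vzero" by (simp add: vzero_def)
  ultimately show ?thesis by (simp add: vzero_def)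
qed

lemma lmap_scale: "lmap T \<Longrightarrow> f \<in> l2 \<Longrightarrow> T (\<lambda>i. c * f i) = (\<lambda>i. c * T f i)"
proof -
  assume T: "lmap T" and f: "f \<in> l2"
  have "T (\<lambda>i. c * f i + vzero i) = (\<lambda>i. c * T f i + T vzero i)" by (rule lmap_lin[OF T f l2_vzero])
  thus ?thesis using lmap_zero[OF T] by (simp add: vzero_def)
qed

lemma lmap_add: "lmap T \<Longrightarrow> f \<in> l2 \<Longrightarrow> g \<in> l2 \<Longrightarrow> T (\<lambda>i. f i + g i) = (\<lambda>i. T f i + T g i)"
  using lmap_lin[of T f g 1] by simp

lemma lmap_vadd: "lmap T \<Longrightarrow> f \<in> l2 \<Longrightarrow> g \<in> l2 \<Longrightarrow> T (vadd f g) = vadd (T f) (T g)"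
  unfolding vadd_def by (rule lmap_add)

lemma lmap_vsub: "lmap T \<Longrightarrow> f \<in> l2 \<Longrightarrow> g \<in> l2 \<Longrightarrow> T (vsub f g) = vsub (T f) (T g)"
  unfolding vsub_def using lmap_lin[of T g f "-1"] by (simp add: algebra_simps)

lemma lmap_lin2: "lmap T \<Longrightarrow> f \<in> l2 \<Longrightarrow> g \<in> l2 \<Longrightarrow> T (\<lambda>i. a * f i + b * g i) = (\<lambda>i. a * T f i + b * T g i)"
  using lmap_lin[of T f "\<lambda>i. b * g i" a] lmap_scale[of T g b] l2_scale[of g b] by simp

lemma lmap_lin3: "lmap T \<Longrightarrow> f \<in> l2 \<Longrightarrow> g \<in> l2 \<Longrightarrow> h \<in> l2 \<Longrightarrow>
   T (\<lambda>i. a * f i + b * g i + c * h i) = (\<lambda>i. a * T f i + b * T g i + c * T h i)"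
proof -
  assume T: "lmap T" and fgh: "f \<in> l2" "g \<in> l2" "h \<in> l2"
  have gh: "(\<lambda>i. b * g i + c * h i) \<in> l2" using l2_comb(1)[OF fgh(2,3)] .
  have "T (\<lambda>i. a * f i + b * g i + c * h i) = T (\<lambda>i. a * f i + (b * g i + c * h i))"
    by (simp add: add.assoc)
  also have "\<dots> = (\<lambda>i. a * T f i + T (\<lambda>i. b * g i + c * h i) i)"
    using lmap_lin[OF T fgh(1) gh] by simp
  also have "\<dots> = (\<lambda>i. a * T f i + b * T g i + c * T h i)"
    using lmap_lin2[OF T fgh(2,3)] by (simp add: add.assoc)
  finally show ?thesis .
qed

lemma vsub_zero_iff: "vsub f g = vzero \<longleftrightarrow> f = g"
  by (auto simp: vsub_def vzero_def fun_eq_iff)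

section \<open>Koszul exactness from a homotopy\<close>

lemma lin_aux: "(a::complex) + b + c = 0 \<Longrightarrow> a + d + e = y \<Longrightarrow> d - b - (c - e) = y"
  by algebra
lemma lin_aux2: "(a::complex) + b + c = 0 \<Longrightarrow> d + b + e = y \<Longrightarrow> e - c - (a - d) = y"
  by algebra
lemma lin_aux3: "(a::complex) + b + c = 0 \<Longrightarrow> d + e + c = y \<Longrightarrow> d - a - (b - e) = y"
  by algebra

lemma koszul_from_homotopy:
  assumes T: "lmap T1" "lmap T2" "lmap T3"
    and B: "lmap B1" "lmap B2" "lmap B3"
    and C: "\<And>f. f \<in> l2 \<Longrightarrow> T1 (B1 f) = B1 (T1 f)" "\<And>f. f \<in> l2 \<Longrightarrow> T1 (B2 f) = B2 (T1 f)"
      "\<And>f. f \<in> l2 \<Longrightarrow> T1 (B3 f) = B3 (T1 f)" "\<And>f. f \<in> l2 \<Longrightarrow> T2 (B1 f) = B1 (T2 f)"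
      "\<And>f. f \<in> l2 \<Longrightarrow> T2 (B2 f) = B2 (T2 f)" "\<And>f. f \<in> l2 \<Longrightarrow> T2 (B3 f) = B3 (T2 f)"
      "\<And>f. f \<in> l2 \<Longrightarrow> T3 (B1 f) = B1 (T3 f)" "\<And>f. f \<in> l2 \<Longrightarrow> T3 (B2 f) = B2 (T3 f)"
      "\<And>f. f \<in> l2 \<Longrightarrow> T3 (B3 f) = B3 (T3 f)"
    and H: "\<And>f. f \<in> l2 \<Longrightarrow> vadd (vadd (B1 (T1 f)) (B2 (T2 f))) (B3 (T3 f)) = f"
  shows "koszul_exact T1 T2 T3"
  unfolding koszul_exact_def
proof (intro conjI ballI impI)
  fix x assume x: "x \<in> l2" and z: "T1 x = vzero \<and> T2 x = vzero \<and> T3 x = vzero"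
  show "x = vzero" using H[OF x] z lmap_zero[OF B(1)] lmap_zero[OF B(2)] lmap_zero[OF B(3)]
    by (simp add: vadd_def vzero_def)
next
  fix x1 x2 x3 assume x: "x1 \<in> l2" "x2 \<in> l2" "x3 \<in> l2"
    and cyc: "vsub (T2 x3) (T3 x2) = vzero \<and> vsub (T3 x1) (T1 x3) = vzero \<and> vsub (T1 x2) (T2 x1) = vzero"
  have e: "T2 x3 = T3 x2" "T3 x1 = T1 x3" "T1 x2 = T2 x1" using cyc by (auto simp: vsub_zero_iff)
  define y where "y = vadd (vadd (B1 x1) (B2 x2)) (B3 x3)"
  have l: "B1 x1 \<in> l2" "B2 x2 \<in> l2" "B3 x3 \<in> l2" using x B by (auto intro: lmap_l2)
  have y: "y \<in> l2" unfolding y_def using l by (intro l2_vadd)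
  have Ty: "Tk y = vadd (vadd (B1 (Tk x1)) (B2 (Tk x2))) (B3 (Tk x3))"
    if Tk: "lmap Tk" and c1: "Tk (B1 x1) = B1 (Tk x1)" and c2: "Tk (B2 x2) = B2 (Tk x2)"
      and c3: "Tk (B3 x3) = B3 (Tk x3)" for Tk
    unfolding y_def using l
    by (simp add: lmap_vadd[OF Tk] l2_vadd c1 c2 c3)
  show "\<exists>y\<in>l2. x1 = T1 y \<and> x2 = T2 y \<and> x3 = T3 y"
  proof (intro bexI[OF _ y] conjI)
    show "x1 = T1 y" using Ty[OF T(1) C(1)[OF x(1)] C(2)[OF x(2)] C(3)[OF x(3)]] H[OF x(1)] e by simp
    show "x2 = T2 y" using Ty[OF T(2) C(4)[OF x(1)] C(5)[OF x(2)] C(6)[OF x(3)]] H[OF x(2)] e by simp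
    show "x3 = T3 y" using Ty[OF T(3) C(7)[OF x(1)] C(8)[OF x(2)] C(9)[OF x(3)]] H[OF x(3)] e by simp
  qed
next
  fix y1 y2 y3 assume y: "y1 \<in> l2" "y2 \<in> l2" "y3 \<in> l2"
    and z: "vadd (vadd (T1 y1) (T2 y2)) (T3 y3) = vzero"
  have Ty: "T1 y1 \<in> l2" "T2 y2 \<in> l2" "T3 y3 \<in> l2" using y T by (auto intro: lmap_l2)
  have zB: "\<And>i. Bk (T1 y1) i + Bk (T2 y2) i + Bk (T3 y3) i = 0" if Bk: "lmap Bk" for Bk
  proof -
    have "Bk (vadd (vadd (T1 y1) (T2 y2)) (T3 y3)) = vzero" using z lmap_zero[OF Bk] by simp
    hence "vadd (vadd (Bk (T1 y1)) (Bk (T2 y2))) (Bk (T3 y3)) = vzero"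
      using Ty by (simp add: lmap_vadd[OF Bk] l2_vadd)
    thus "\<And>i. Bk (T1 y1) i + Bk (T2 y2) i + Bk (T3 y3) i = 0" by (simp add: vadd_def vzero_def fun_eq_iff)
  qed
  have Hp: "\<And>i. B1 (T1 f) i + B2 (T2 f) i + B3 (T3 f) i = f i" if "f \<in> l2" for f
    using H[OF that] by (simp add: vadd_def fun_eq_iff)
  define x1 where "x1 = vsub (B3 y2) (B2 y3)"
  define x2 where "x2 = vsub (B1 y3) (B3 y1)"
  define x3 where "x3 = vsub (B2 y1) (B1 y2)"
  have By: "Bj yk \<in> l2" if "lmap Bj" "yk \<in> l2" for Bj yk using that by (rule lmap_l2)
  have xl: "x1 \<in> l2" "x2 \<in> l2" "x3 \<in> l2" unfolding x1_def x2_def x3_def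
    by (intro l2_vsub lmap_l2[OF B(1)] lmap_l2[OF B(2)] lmap_l2[OF B(3)] y)+
  have t1: "vsub (T2 x3) (T3 x2) = y1"
  proof -
    have "T2 x3 = vsub (B2 (T2 y1)) (B1 (T2 y2))" unfolding x3_def
      using y B by (simp add: lmap_vsub[OF T(2)] By C(4,5))
    moreover have "T3 x2 = vsub (B1 (T3 y3)) (B3 (T3 y1))" unfolding x2_def
      using y B by (simp add: lmap_vsub[OF T(3)] By C(7,9))
    ultimately show ?thesis
      unfolding vsub_def fun_eq_iff using lin_aux[OF zB[OF B(1)] Hp[OF y(1)]] by simp
  qed
  have t2: "vsub (T3 x1) (T1 x3) = y2"
  proof -
    have "T3 x1 = vsub (B3 (T3 y2)) (B2 (T3 y3))" unfolding x1_def
      using y B by (simp add: lmap_vsub[OF T(3)] By C(8,9))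
    moreover have "T1 x3 = vsub (B2 (T1 y1)) (B1 (T1 y2))" unfolding x3_def
      using y B by (simp add: lmap_vsub[OF T(1)] By C(1,2))
    ultimately show ?thesis
      unfolding vsub_def fun_eq_iff using lin_aux2[OF zB[OF B(2)] Hp[OF y(2)]] by simp
  qed
  have t3: "vsub (T1 x2) (T2 x1) = y3"
  proof -
    have "T1 x2 = vsub (B1 (T1 y3)) (B3 (T1 y1))" unfolding x2_def
      using y B by (simp add: lmap_vsub[OF T(1)] By C(1,3))
    moreover have "T2 x1 = vsub (B3 (T2 y2)) (B2 (T2 y3))" unfolding x1_def
      using y B by (simp add: lmap_vsub[OF T(2)] By C(5,6))
    ultimately show ?thesis
      unfolding vsub_def fun_eq_iff using lin_aux3[OF zB[OF B(3)] Hp[OF y(3)]] by simp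
  qed
  show "\<exists>x1\<in>l2. \<exists>x2\<in>l2. \<exists>x3\<in>l2. y1 = vsub (T2 x3) (T3 x2) \<and> y2 = vsub (T3 x1) (T1 x3) \<and> y3 = vsub (T1 x2) (T2 x1)"
    using xl t1 t2 t3 by blast
next
  fix z :: "'a \<Rightarrow> complex" assume z: "z \<in> l2"
  have l: "B1 z \<in> l2" "B2 z \<in> l2" "B3 z \<in> l2" using z B by (auto intro: lmap_l2)
  show "\<exists>y1\<in>l2. \<exists>y2\<in>l2. \<exists>y3\<in>l2. z = vadd (vadd (T1 y1) (T2 y2)) (T3 y3)"
  proof (intro bexI)
    show "z = vadd (vadd (T1 (B1 z)) (T2 (B2 z))) (T3 (B3 z))"
      using H[OF z] C(1)[OF z] C(5)[OF z] C(9)[OF z] by simp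
  qed (use l in auto)
qed


section \<open>Weighted composition operators\<close>

definition Lop :: "('k \<Rightarrow> 'k) \<Rightarrow> ('k \<Rightarrow> 'k) \<Rightarrow> complex \<Rightarrow> complex \<Rightarrow> 'k op" where
  "Lop r1 r2 a b f = (\<lambda>i. a * f (r1 i) + b * f (r2 i))"

lemma bij_of_inv: "(\<And>x. s' (s x) = x) \<Longrightarrow> (\<And>x. s (s' x) = x) \<Longrightarrow> bij s"
  by (rule o_bij[of s']) (simp_all add: fun_eq_iff)

lemma Lop_l2: "bij r1 \<Longrightarrow> bij r2 \<Longrightarrow> f \<in> l2 \<Longrightarrow> Lop r1 r2 a b f \<in> l2"
  unfolding Lop_def by (rule l2_comb(1)) (simp_all add: l2_comp_bij)

lemma Lop_bounded:
  assumes r: "bij r1" "bij r2"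
  shows "bounded_op (Lop r1 r2 a b)"
  unfolding bounded_op_def
proof (intro conjI ballI allI)
  fix f :: "'a \<Rightarrow> complex" assume "f \<in> l2" thus "Lop r1 r2 a b f \<in> l2" using Lop_l2 r by blast
next
  fix f g :: "'a \<Rightarrow> complex" and c
  show "Lop r1 r2 a b (\<lambda>i. c * f i + g i) = (\<lambda>i. c * Lop r1 r2 a b f i + Lop r1 r2 a b g i)"
    by (simp add: Lop_def fun_eq_iff algebra_simps)
next
  define C where "C = sqrt (2*(cmod a)\<^sup>2 + 2*(cmod b)\<^sup>2)"
  show "\<exists>C. \<forall>f\<in>l2. l2_norm (Lop r1 r2 a b f) \<le> C * l2_norm f"
  proof (intro exI ballI)
    fix f :: "'a \<Rightarrow> complex" assume f: "f \<in> l2"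
    have f1: "(\<lambda>i. f (r1 i)) \<in> l2" "(\<lambda>i. f (r2 i)) \<in> l2" using f r by (simp_all add: l2_comp_bij)
    have "(l2_norm (Lop r1 r2 a b f))\<^sup>2 \<le> 2*(cmod a)\<^sup>2*(l2_norm f)\<^sup>2 + 2*(cmod b)\<^sup>2*(l2_norm f)\<^sup>2"
      using l2_comb(2)[OF f1, of a b] r by (simp add: Lop_def l2_comp_bij)
    also have "\<dots> = (C * l2_norm f)\<^sup>2" by (simp add: C_def power_mult_distrib algebra_simps)
    finally show "l2_norm (Lop r1 r2 a b f) \<le> C * l2_norm f"
      by (rule power2_le_imp_le) (simp add: C_def l2_norm_nonneg)
  qed
qed

lemma Lop_lmap: "bij r1 \<Longrightarrow> bij r2 \<Longrightarrow> lmap (Lop r1 r2 a b)"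
  by (rule bounded_lmap[OF Lop_bounded])

lemma inner_reindex':
  assumes "\<And>x. s' (s x) = x" "\<And>x. s (s' x) = x"
  shows "l2_inner (\<lambda>i. f (s i)) g = l2_inner f (\<lambda>i. g (s' i))"
proof -
  have b: "bij s" by (rule bij_of_inv[OF assms])
  have "inv s = s'" by (rule inv_equality) (simp_all add: assms)
  thus ?thesis using inner_reindex[OF b] by simp
qed

lemma Lop_adj:
  assumes "\<And>x. r1' (r1 x) = x" "\<And>x. r1 (r1' x) = x" "\<And>x. r2' (r2 x) = x" "\<And>x. r2 (r2' x) = x"
  shows "is_adjoint (Lop r1 r2 a b) (Lop r1' r2' (cnj a) (cnj b))"
  unfolding is_adjoint_def
proof (intro conjI ballI)
  have b: "bij r1" "bij r2" "bij r1'" "bij r2'"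
    using bij_of_inv[of r1' r1] bij_of_inv[of r1 r1'] bij_of_inv[of r2' r2] bij_of_inv[of r2 r2'] assms
    by auto
  show "bounded_op (Lop r1' r2' (cnj a) (cnj b))" by (rule Lop_bounded[OF b(3,4)])
  fix f g :: "'a \<Rightarrow> complex" assume f: "f \<in> l2" and g: "g \<in> l2"
  have f1: "(\<lambda>i. f (r1 i)) \<in> l2" "(\<lambda>i. f (r2 i)) \<in> l2" using f b by (simp_all add: l2_comp_bij)
  have g1: "(\<lambda>i. g (r1' i)) \<in> l2" "(\<lambda>i. g (r2' i)) \<in> l2" using g b by (simp_all add: l2_comp_bij)
  have "l2_inner (Lop r1 r2 a b f) g = a * l2_inner (\<lambda>i. f (r1 i)) g + b * l2_inner (\<lambda>i. f (r2 i)) g"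
    unfolding Lop_def by (rule inner_left[OF f1 g])
  also have "\<dots> = a * l2_inner f (\<lambda>i. g (r1' i)) + b * l2_inner f (\<lambda>i. g (r2' i))"
    using inner_reindex'[of r1' r1] inner_reindex'[of r2' r2] assms by simp
  also have "\<dots> = l2_inner f (Lop r1' r2' (cnj a) (cnj b) g)"
    unfolding Lop_def using inner_right[OF g1 f, of "cnj a" "cnj b"] by simp
  finally show "l2_inner (Lop r1 r2 a b f) g = l2_inner f (Lop r1' r2' (cnj a) (cnj b) g)" .
qed

lemma Lop_comm:
  assumes "\<And>x. r1 (r3 x) = r3 (r1 x)" "\<And>x. r1 (r4 x) = r4 (r1 x)"
    "\<And>x. r2 (r3 x) = r3 (r2 x)" "\<And>x. r2 (r4 x) = r4 (r2 x)"
  shows "commute_op (Lop r1 r2 a b) (Lop r3 r4 c d)"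
  unfolding commute_op_def Lop_def by (simp add: assms fun_eq_iff algebra_simps)

lemma inv_comm:
  assumes "\<And>x. s' (s x) = x" "\<And>x. s (s' x) = x" "\<And>x. r (s x) = s (r x)"
  shows "r (s' x) = s' (r x)"
proof -
  have "r (s' x) = s' (s (r (s' x)))" by (simp add: assms(1))
  also have "s (r (s' x)) = r (s (s' x))" by (simp add: assms(3))
  finally show ?thesis by (simp add: assms(2))
qed


definition good :: "('k \<Rightarrow> 'k) \<Rightarrow> ('k \<Rightarrow> 'k) \<Rightarrow> 'k op \<Rightarrow> bool" where
  "good s1 s2 B \<longleftrightarrow> lmap B \<and> (\<forall>f\<in>l2. B (\<lambda>i. f (s1 i)) = (\<lambda>i. B f (s1 i)))
     \<and> (\<forall>f\<in>l2. B (\<lambda>i. f (s2 i)) = (\<lambda>i. B f (s2 i)))"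

lemma lmap_shift:
  assumes "lmap T" shows "lmap (shift_op T c)"
  unfolding lmap_def
proof (intro conjI ballI allI)
  fix f :: "'a \<Rightarrow> complex" assume f: "f \<in> l2"
  have "(\<lambda>i. 1 * T f i + (-c) * f i) \<in> l2" by (rule l2_comb(1)[OF lmap_l2[OF assms f] f])
  thus "shift_op T c f \<in> l2" by (simp add: shift_op_def)
next
  fix f g :: "'a \<Rightarrow> complex" and d assume f: "f \<in> l2" and g: "g \<in> l2"
  show "shift_op T c (\<lambda>i. d * f i + g i) = (\<lambda>i. d * shift_op T c f i + shift_op T c g i)"
    unfolding shift_op_def using lmap_lin[OF assms f g, of d] by (simp add: fun_eq_iff algebra_simps)
qed

lemma shiftLop_comm:
  assumes B: "lmap B" and r: "bij r1" "bij r2" and f: "f \<in> l2"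
    and c1: "B (\<lambda>i. f (r1 i)) = (\<lambda>i. B f (r1 i))" and c2: "B (\<lambda>i. f (r2 i)) = (\<lambda>i. B f (r2 i))"
  shows "shift_op (Lop r1 r2 a b) c (B f) = B (shift_op (Lop r1 r2 a b) c f)"
proof -
  have f1: "(\<lambda>i. f (r1 i)) \<in> l2" "(\<lambda>i. f (r2 i)) \<in> l2" using f r by (simp_all add: l2_comp_bij)
  have "shift_op (Lop r1 r2 a b) c f = (\<lambda>i. a * f (r1 i) + b * f (r2 i) + (-c) * f i)"
    by (simp add: shift_op_def Lop_def)
  hence "B (shift_op (Lop r1 r2 a b) c f) = (\<lambda>i. a * B (\<lambda>i. f (r1 i)) i + b * B (\<lambda>i. f (r2 i)) i + (-c) * B f i)"
    using lmap_lin3[OF B f1 f, of a b "-c"] by simp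
  thus ?thesis by (simp add: c1 c2 shift_op_def Lop_def)
qed

lemma good_Lop:
  assumes "bij r1" "bij r2" "\<And>x. r1 (s1 x) = s1 (r1 x)" "\<And>x. r2 (s1 x) = s1 (r2 x)"
    "\<And>x. r1 (s2 x) = s2 (r1 x)" "\<And>x. r2 (s2 x) = s2 (r2 x)"
  shows "good s1 s2 (Lop r1 r2 a b)"
  unfolding good_def using Lop_lmap[OF assms(1,2)] by (simp add: Lop_def assms)

lemma good_scale:
  assumes "good s1 s2 B" shows "good s1 s2 (\<lambda>g i. c * B g i)"
  unfolding good_def lmap_def
proof (intro conjI ballI allI)
  have B: "lmap B" using assms by (simp add: good_def)
  fix f g :: "'a \<Rightarrow> complex" and d assume f: "f \<in> l2" and g: "g \<in> l2"
  show "(\<lambda>i. c * B (\<lambda>i. d * f i + g i) i) = (\<lambda>i. d * (c * B f i) + c * B g i)"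
    using lmap_lin[OF B f g, of d] by (simp add: algebra_simps)
next
  have B: "lmap B" using assms by (simp add: good_def)
  fix f :: "'a \<Rightarrow> complex" assume f: "f \<in> l2"
  show "(\<lambda>i. c * B f i) \<in> l2" by (rule l2_scale[OF lmap_l2[OF B f]])
  show "(\<lambda>i. c * B (\<lambda>i. f (s1 i)) i) = (\<lambda>i. c * B f (s1 i))" using assms f by (simp add: good_def)
  show "(\<lambda>i. c * B (\<lambda>i. f (s2 i)) i) = (\<lambda>i. c * B f (s2 i))" using assms f by (simp add: good_def)
qed

lemma good_zero: "good s1 s2 (\<lambda>g i. 0)"
  unfolding good_def lmap_def by (simp add: l2_zero)

lemma resolvent:
  assumes i: "\<And>x. t (s x) = x" "\<And>x. s (t x) = x"
    and c: "\<And>x. s (s1 x) = s1 (s x)" "\<And>x. s (s2 x) = s2 (s x)"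
    and w: "cmod w \<noteq> 1"
  shows "\<exists>R. good s1 s2 R \<and> (\<forall>g\<in>l2. R (\<lambda>i. g (s i) - w * g i) = g)"
proof -
  have bs: "bij s" "bij t" using bij_of_inv[of t s] bij_of_inv[of s t] i by auto
  have ct: "t (s1 x) = s1 (t x)" "t (s2 x) = s2 (t x)" for x
    using inv_comm[of t s "s1", OF i] inv_comm[of t s "s2", OF i] c by metis+
  show ?thesis
  proof (cases "cmod w > 1")
    case True
    hence w0: "w \<noteq> 0" by auto
    have cw: "cmod (1/w) < 1" using True by (simp add: norm_divide divide_less_eq)
    define R where "R g = Gop s (1/w) (\<lambda>i. (-1/w) * g i)" for g
    have Rl2: "R g \<in> l2" if "g \<in> l2" for g
      unfolding R_def by (rule G_l2[OF cw bs(1) l2_scale[OF that]])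
    have good: "good s1 s2 R"
      unfolding good_def lmap_def
    proof (intro conjI ballI allI)
      fix f g :: "'a \<Rightarrow> complex" and d assume f: "f \<in> l2" and g: "g \<in> l2"
      have "R (\<lambda>i. d * f i + g i) = Gop s (1/w) (\<lambda>i. d * ((-1/w) * f i) + (-1/w) * g i)"
        unfolding R_def by (simp add: algebra_simps)
      also have "\<dots> = (\<lambda>i. d * R f i + R g i)"
        unfolding R_def by (rule G_lin[OF cw l2_scale[OF f] l2_scale[OF g]])
      finally show "R (\<lambda>i. d * f i + g i) = (\<lambda>i. d * R f i + R g i)" .
    next
      fix f :: "'a \<Rightarrow> complex" assume f: "f \<in> l2"
      show "R f \<in> l2" by (rule Rl2[OF f])
      show "R (\<lambda>i. f (s1 i)) = (\<lambda>i. R f (s1 i))"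
        unfolding R_def using G_comm[of s s1 "1/w" "\<lambda>i. (-1/w) * f i"] c by simp
      show "R (\<lambda>i. f (s2 i)) = (\<lambda>i. R f (s2 i))"
        unfolding R_def using G_comm[of s s2 "1/w" "\<lambda>i. (-1/w) * f i"] c by simp
    qed
    moreover have "\<forall>g\<in>l2. R (\<lambda>i. g (s i) - w * g i) = g"
    proof
      fix g :: "'a \<Rightarrow> complex" assume g: "g \<in> l2"
      have "(\<lambda>i. (-1/w) * (g (s i) - w * g i)) = (\<lambda>i. g i - (1/w) * g (s i))"
        using w0 by (simp add: fun_eq_iff field_simps)
      thus "R (\<lambda>i. g (s i) - w * g i) = g" unfolding R_def using G_tel[OF cw g, of s] by simp
    qed
    ultimately show ?thesis by blast
  next
    case False
    hence cw: "cmod w < 1" using w by simp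
    define R where "R g = Gop t w (\<lambda>i. g (t i))" for g
    have gt: "(\<lambda>i. g (t i)) \<in> l2" if "g \<in> l2" for g using that bs by (simp add: l2_comp_bij)
    have good: "good s1 s2 R"
      unfolding good_def lmap_def
    proof (intro conjI ballI allI)
      fix f g :: "'a \<Rightarrow> complex" and d assume f: "f \<in> l2" and g: "g \<in> l2"
      show "R (\<lambda>i. d * f i + g i) = (\<lambda>i. d * R f i + R g i)"
        unfolding R_def by (rule G_lin[OF cw gt[OF f] gt[OF g]])
    next
      fix f :: "'a \<Rightarrow> complex" assume f: "f \<in> l2"
      show "R f \<in> l2" unfolding R_def by (rule G_l2[OF cw bs(2) gt[OF f]])
      show "R (\<lambda>i. f (s1 i)) = (\<lambda>i. R f (s1 i))"
        unfolding R_def using G_comm[of t s1 w "\<lambda>i. f (t i)"] ct by simp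
      show "R (\<lambda>i. f (s2 i)) = (\<lambda>i. R f (s2 i))"
        unfolding R_def using G_comm[of t s2 w "\<lambda>i. f (t i)"] ct by simp
    qed
    moreover have "\<forall>g\<in>l2. R (\<lambda>i. g (s i) - w * g i) = g"
    proof
      fix g :: "'a \<Rightarrow> complex" assume g: "g \<in> l2"
      show "R (\<lambda>i. g (s i) - w * g i) = g" unfolding R_def using G_tel[OF cw g, of t] i by simp
    qed
    ultimately show ?thesis by blast
  qed
qed


section \<open>The distinguished boundary points\<close>

definition dmat :: "real \<Rightarrow> complex \<Rightarrow> complex \<Rightarrow> complex^2^2" where
  "dmat r w1 w2 = (\<chi> i j. if i = j then (if i = 1 then of_real r * w1 else of_real r * w2) else 0)"

lemma dmat_mult: "(dmat r w1 w2 *v x) $ 1 = of_real r * w1 * x$1" "(dmat r w1 w2 *v x) $ 2 = of_real r * w2 * x$2"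
  by (simp_all add: dmat_def matrix_vector_mult_def sum_2)

lemma dmat_norm:
  assumes "cmod w1 = 1" "cmod w2 = 1" "0 \<le> r"
  shows "norm (dmat r w1 w2 *v x) = r * norm x"
proof -
  have "norm (dmat r w1 w2 *v x) = sqrt ((r * cmod (x$1))\<^sup>2 + (r * cmod (x$2))\<^sup>2)"
    unfolding norm_vec_def L2_set_def using assms by (simp add: sum_2 dmat_mult norm_mult)
  also have "\<dots> = sqrt (r\<^sup>2 * ((cmod (x$1))\<^sup>2 + (cmod (x$2))\<^sup>2))"
    by (simp add: power_mult_distrib algebra_simps)
  also have "\<dots> = r * norm x"
    unfolding norm_vec_def L2_set_def using assms by (simp add: sum_2 real_sqrt_mult)
  finally show ?thesis .
qed

lemma dmat_in:
  assumes "cmod w1 = 1" "cmod w2 = 1" "0 \<le> r" "r < 1"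
  shows "(of_real r * w1 + of_real r * w2, of_real r * w1 * (of_real r * w2)) \<in> symmetrized_bidisc"
proof -
  have "onorm (\<lambda>x. dmat r w1 w2 *v x) \<le> r"
    by (rule onorm_le) (simp add: dmat_norm assms)
  hence "onorm (\<lambda>x. dmat r w1 w2 *v x) < 1" using assms by simp
  moreover have "mat_tr (dmat r w1 w2) = of_real r * w1 + of_real r * w2"
    by (simp add: mat_tr_def dmat_def)
  moreover have "det (dmat r w1 w2) = of_real r * w1 * (of_real r * w2)"
    by (simp add: det_2 dmat_def)
  ultimately show ?thesis unfolding symmetrized_bidisc_def by (metis (mono_tags, lifting) mem_Collect_eq)
qed

lemma Gamma_point:
  assumes "cmod w1 = 1" "cmod w2 = 1"
  shows "(w1 + w2, w1 * w2) \<in> Gamma"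
  unfolding Gamma_def closure_sequential
proof (intro exI conjI allI)
  define r where "r n = 1 - 1 / (real n + 2)" for n
  have r: "0 \<le> r n" "r n < 1" for n by (simp_all add: r_def field_simps)
  show "(of_real (r n) * w1 + of_real (r n) * w2, of_real (r n) * w1 * (of_real (r n) * w2)) \<in> symmetrized_bidisc" for n
    by (rule dmat_in[OF assms r])
  have "r \<longlonglongrightarrow> 1 - 0" unfolding r_def
    by (intro tendsto_intros) real_asymp
  hence r1: "(\<lambda>n. complex_of_real (r n)) \<longlonglongrightarrow> 1"
    using tendsto_of_real by fastforce
  show "(\<lambda>n. (of_real (r n) * w1 + of_real (r n) * w2, of_real (r n) * w1 * (of_real (r n) * w2))) \<longlonglongrightarrow> (w1 + w2, w1 * w2)"
    using tendsto_Pair[OF tendsto_add[OF tendsto_mult[OF r1 tendsto_const] tendsto_mult[OF r1 tendsto_const]]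
      tendsto_mult[OF tendsto_mult[OF r1 tendsto_const] tendsto_mult[OF r1 tendsto_const]], of w1 w2 w1 w2]
    by simp
qed

lemma cnj_unit: "cmod w = 1 \<Longrightarrow> cnj w * w = 1"
  by (metis complex_norm_square mult.commute of_real_1 power_one)

lemma bP_point:
  assumes "cmod w1 = 1" "cmod w2 = 1"
  shows "((w1 - w2)/2, w1 + w2, w1 * w2) \<in> bP"
proof -
  have g: "(w1 + w2, w1 * w2) \<in> Gamma" by (rule Gamma_point[OF assms])
  have e1: "w1 + w2 = cnj (w1 + w2) * (w1 * w2)"
    using cnj_unit[OF assms(1)] cnj_unit[OF assms(2)] by (simp add: algebra_simps)
  have e2: "cmod (w1 * w2) = 1" using assms by (simp add: norm_mult)
  have e3: "(cmod ((w1 - w2)/2))\<^sup>2 = 1 - (cmod (w1 + w2))\<^sup>2 / 4"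
  proof -
    have "(cmod (w1 - w2))\<^sup>2 + (cmod (w1 + w2))\<^sup>2 = 2*(cmod w1)\<^sup>2 + 2*(cmod w2)\<^sup>2"
      unfolding cmod_power2 by (simp add: power2_eq_square algebra_simps)
    moreover have "(cmod ((w1 - w2)/2))\<^sup>2 = (cmod (w1 - w2))\<^sup>2 / 4"
      by (simp add: norm_divide power_divide)
    ultimately show ?thesis using assms by simp
  qed
  have bG: "(w1 + w2, w1 * w2) \<in> bGamma" unfolding bGamma_def
    by (simp only: mem_Collect_eq case_prod_conv) (use g e1 e2 in blast)
  show ?thesis unfolding bP_def
    by (simp only: mem_Collect_eq case_prod_conv) (use bG e3 in blast)
qed


lemma caseC_alg:
  fixes A Bv C D F a s p c w1 w2 :: complex
  assumes "c \<noteq> 0" "c = w1 * w2 - p" "w1 = s/2 + a" "w2 = s/2 - a"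
  shows "w1 * (A / 2 - Bv / 2 - a * F) / c - (C / 2 - D / 2 - a * Bv) / c +
         (- ((C + D - s * Bv) / (2 * c)) - w1 * (A + Bv - s * F) / (2 * c)) + (C - p * F) / c = F"
proof -
  have "w1 * (A / 2 - Bv / 2 - a * F) - (C / 2 - D / 2 - a * Bv) +
         (- ((C + D - s * Bv) / 2) - w1 * (A + Bv - s * F) / 2) + (C - p * F) = c * F"
    unfolding assms(2) assms(3) assms(4) by (simp add: field_simps)
  hence "(w1 * (A / 2 - Bv / 2 - a * F) - (C / 2 - D / 2 - a * Bv) +
         (- ((C + D - s * Bv) / 2) - w1 * (A + Bv - s * F) / 2) + (C - p * F)) / c = F"
    using assms(1) by simp
  moreover have "w1 * (A / 2 - Bv / 2 - a * F) / c - (C / 2 - D / 2 - a * Bv) / c +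
         (- ((C + D - s * Bv) / (2 * c)) - w1 * (A + Bv - s * F) / (2 * c)) + (C - p * F) / c =
     (w1 * (A / 2 - Bv / 2 - a * F) - (C / 2 - D / 2 - a * Bv) +
         (- ((C + D - s * Bv) / 2) - w1 * (A + Bv - s * F) / 2) + (C - p * F)) / c"
    using assms(1) by (simp add: field_simps)
  ultimately show ?thesis by simp
qed

section \<open>The P-unitary built from two commuting bijections\<close>

locale twoshift =
  fixes s1 s2 t1 t2 :: "'k \<Rightarrow> 'k"
  assumes i1[simp]: "\<And>x. t1 (s1 x) = x" and i1'[simp]: "\<And>x. s1 (t1 x) = x"
    and i2[simp]: "\<And>x. t2 (s2 x) = x" and i2'[simp]: "\<And>x. s2 (t2 x) = x"
    and cm[simp]: "\<And>x. s1 (s2 x) = s2 (s1 x)"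
begin

lemma c2[simp]: "s1 (t2 x) = t2 (s1 x)"
  by (rule inv_comm[OF i2 i2']) simp
lemma c3[simp]: "t1 (s2 x) = s2 (t1 x)"
  by (rule inv_comm[OF i1 i1', symmetric]) simp
lemma c4[simp]: "t1 (t2 x) = t2 (t1 x)"
  by (rule inv_comm[OF i2 i2']) simp

lemma bijs: "bij s1" "bij s2" "bij t1" "bij t2" "bij (\<lambda>x. s2 (s1 x))" "bij (\<lambda>x. t1 (t2 x))" "bij (\<lambda>x. x)"
proof -
  show "bij s1" by (rule bij_of_inv[of t1]) simp_all
  show "bij s2" by (rule bij_of_inv[of t2]) simp_all
  show "bij t1" by (rule bij_of_inv[of s1]) simp_all
  show "bij t2" by (rule bij_of_inv[of s2]) simp_all
  show "bij (\<lambda>x. s2 (s1 x))" by (rule bij_of_inv[of "\<lambda>x. t1 (t2 x)"]) simp_all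
  show "bij (\<lambda>x. t1 (t2 x))" by (rule bij_of_inv[of "\<lambda>x. s2 (s1 x)"]) simp_all
  show "bij (\<lambda>x. x)" by (rule bij_of_inv[of "\<lambda>x. x"]) simp_all
qed

definition "U1 = Lop s1 s2 (1/2) (-1/2)"
definition "U2 = Lop s1 s2 1 1"
definition "U3 = Lop (\<lambda>x. s2 (s1 x)) (\<lambda>x. s2 (s1 x)) 1 0"

lemma normal_U1: "normal_op U1"
  unfolding normal_op_def U1_def
proof (intro conjI exI)
  show "bounded_op (Lop s1 s2 (1 / 2) (- 1 / 2))" by (rule Lop_bounded[OF bijs(1,2)])
  show "is_adjoint (Lop s1 s2 (1 / 2) (- 1 / 2)) (Lop t1 t2 (cnj (1/2)) (cnj (-1/2)))"
    by (rule Lop_adj) simp_all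
  show "commute_op (Lop s1 s2 (1 / 2) (- 1 / 2)) (Lop t1 t2 (cnj (1/2)) (cnj (-1/2)))"
    by (rule Lop_comm) simp_all
qed

lemma normal_U2: "normal_op U2"
  unfolding normal_op_def U2_def
proof (intro conjI exI)
  show "bounded_op (Lop s1 s2 1 1)" by (rule Lop_bounded[OF bijs(1,2)])
  show "is_adjoint (Lop s1 s2 1 1) (Lop t1 t2 (cnj 1) (cnj 1))"
    by (rule Lop_adj) simp_all
  show "commute_op (Lop s1 s2 1 1) (Lop t1 t2 (cnj 1) (cnj 1))"
    by (rule Lop_comm) simp_all
qed

lemma normal_U3: "normal_op U3"
  unfolding normal_op_def U3_def
proof (intro conjI exI)
  show "bounded_op (Lop (\<lambda>x. s2 (s1 x)) (\<lambda>x. s2 (s1 x)) 1 0)" by (rule Lop_bounded[OF bijs(5,5)])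
  show "is_adjoint (Lop (\<lambda>x. s2 (s1 x)) (\<lambda>x. s2 (s1 x)) 1 0) (Lop (\<lambda>x. t1 (t2 x)) (\<lambda>x. t1 (t2 x)) (cnj 1) (cnj 0))"
    by (rule Lop_adj) simp_all
  show "commute_op (Lop (\<lambda>x. s2 (s1 x)) (\<lambda>x. s2 (s1 x)) 1 0) (Lop (\<lambda>x. t1 (t2 x)) (\<lambda>x. t1 (t2 x)) (cnj 1) (cnj 0))"
    by (rule Lop_comm) simp_all
qed

lemma comms: "commute_op U1 U2" "commute_op U1 U3" "commute_op U2 U3"
  unfolding U1_def U2_def U3_def by (rule Lop_comm; simp)+

abbreviation "T1 a \<equiv> shift_op U1 a"
abbreviation "T2 s \<equiv> shift_op U2 s"
abbreviation "T3 p \<equiv> shift_op U3 p"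

lemma good_comp_rho:
  assumes "good s1 s2 B" "f \<in> l2"
  shows "B (\<lambda>i. f (s2 (s1 i))) = (\<lambda>i. B f (s2 (s1 i)))"
proof -
  have f2: "(\<lambda>j. f (s2 j)) \<in> l2" using assms(2) bijs by (simp add: l2_comp_bij)
  have "\<forall>g\<in>l2. B (\<lambda>i. g (s1 i)) = (\<lambda>i. B g (s1 i))" using assms(1) by (simp add: good_def)
  from bspec[OF this f2] have "B (\<lambda>i. (\<lambda>j. f (s2 j)) (s1 i)) = (\<lambda>i. B (\<lambda>j. f (s2 j)) (s1 i))"
    by simp
  also have "B (\<lambda>j. f (s2 j)) = (\<lambda>i. B f (s2 i))" using assms by (simp add: good_def)
  finally show ?thesis by simp
qed

lemma T_comm:
  assumes "good s1 s2 B" "f \<in> l2"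
  shows "T1 a (B f) = B (T1 a f)" "T2 s (B f) = B (T2 s f)" "T3 p (B f) = B (T3 p f)"
proof -
  have B: "lmap B" using assms by (simp add: good_def)
  have c: "B (\<lambda>i. f (s1 i)) = (\<lambda>i. B f (s1 i))" "B (\<lambda>i. f (s2 i)) = (\<lambda>i. B f (s2 i))"
    using assms by (simp_all add: good_def)
  show "T1 a (B f) = B (T1 a f)" unfolding U1_def by (rule shiftLop_comm[OF B bijs(1,2) assms(2) c])
  show "T2 s (B f) = B (T2 s f)" unfolding U2_def by (rule shiftLop_comm[OF B bijs(1,2) assms(2) c])
  show "T3 p (B f) = B (T3 p f)" unfolding U3_def
    by (rule shiftLop_comm[OF B bijs(5,5) assms(2) good_comp_rho[OF assms] good_comp_rho[OF assms]])
qed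

lemma lmap_T: "lmap (T1 a)" "lmap (T2 s)" "lmap (T3 p)"
  unfolding U1_def U2_def U3_def by (intro lmap_shift Lop_lmap bijs)+

lemma exact_from_B:
  assumes g: "good s1 s2 B1" "good s1 s2 B2" "good s1 s2 B3"
    and H: "\<And>f. f \<in> l2 \<Longrightarrow> vadd (vadd (B1 (T1 a f)) (B2 (T2 s f))) (B3 (T3 p f)) = f"
  shows "koszul_exact (T1 a) (T2 s) (T3 p)"
  apply (rule koszul_from_homotopy[of "T1 a" "T2 s" "T3 p" B1 B2 B3, OF lmap_T(1) lmap_T(2) lmap_T(3)])
  using g apply (simp_all add: good_def)[3]
  apply (rule T_comm(1)[OF g(1)], assumption)
  apply (rule T_comm(1)[OF g(2)], assumption)
  apply (rule T_comm(1)[OF g(3)], assumption)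
  apply (rule T_comm(2)[OF g(1)], assumption)
  apply (rule T_comm(2)[OF g(2)], assumption)
  apply (rule T_comm(2)[OF g(3)], assumption)
  apply (rule T_comm(3)[OF g(1)], assumption)
  apply (rule T_comm(3)[OF g(2)], assumption)
  apply (rule T_comm(3)[OF g(3)], assumption)
  by (rule H)

lemma good_R_lmap: "good s1 s2 R \<Longrightarrow> lmap R" by (simp add: good_def)

lemma spectrum: "taylor_spectrum U1 U2 U3 \<subseteq> bP"
proof
  fix x assume xs: "x \<in> taylor_spectrum U1 U2 U3"
  obtain a s p where x: "x = (a, s, p)" by (cases x) auto
  have ne: "\<not> koszul_exact (T1 a) (T2 s) (T3 p)" using xs x by (simp add: taylor_spectrum_def)
  show "x \<in> bP"
  proof (rule ccontr)
    assume nb: "x \<notin> bP"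
    define w1 where "w1 = s/2 + a"
    define w2 where "w2 = s/2 - a"
    have "koszul_exact (T1 a) (T2 s) (T3 p)"
    proof (cases "cmod w1 \<noteq> 1")
      case True
      obtain R where R: "good s1 s2 R" "\<forall>g\<in>l2. R (\<lambda>i. g (s1 i) - w1 * g i) = g"
        using resolvent[of t1 s1 s1 s2 w1] True by auto
      show ?thesis
      proof (rule exact_from_B[OF R(1) good_scale[OF R(1), of "1/2"] good_zero])
        fix f :: "'k \<Rightarrow> complex" assume f: "f \<in> l2"
        have Tl: "T1 a f \<in> l2" "T2 s f \<in> l2" using lmap_T f by (auto intro: lmap_l2)
        have "vadd (vadd (R (T1 a f)) (\<lambda>i. 1/2 * R (T2 s f) i)) (\<lambda>i. 0) = R (\<lambda>i. 1 * T1 a f i + (1/2) * T2 s f i)"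
          using lmap_lin2[OF good_R_lmap[OF R(1)] Tl, of 1 "1/2"] by (simp add: vadd_def)
        also have "(\<lambda>i. 1 * T1 a f i + (1/2) * T2 s f i) = (\<lambda>i. f (s1 i) - w1 * f i)"
          by (simp add: U1_def U2_def shift_op_def Lop_def w1_def fun_eq_iff field_simps)
        finally show "vadd (vadd (R (T1 a f)) (\<lambda>i. 1/2 * R (T2 s f) i)) (\<lambda>i. 0) = f"
          using R(2) f by simp
      qed
    next
      case False
      hence w1u: "cmod w1 = 1" by simp
      show ?thesis
      proof (cases "cmod w2 \<noteq> 1")
        case True
        obtain R where R: "good s1 s2 R" "\<forall>g\<in>l2. R (\<lambda>i. g (s2 i) - w2 * g i) = g"
          using resolvent[of t2 s2 s1 s2 w2] True by auto
        show ?thesis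
        proof (rule exact_from_B[OF good_scale[OF R(1), of "-1"] good_scale[OF R(1), of "1/2"] good_zero])
          fix f :: "'k \<Rightarrow> complex" assume f: "f \<in> l2"
          have Tl: "T1 a f \<in> l2" "T2 s f \<in> l2" using lmap_T f by (auto intro: lmap_l2)
          have "vadd (vadd (\<lambda>i. -1 * R (T1 a f) i) (\<lambda>i. 1/2 * R (T2 s f) i)) (\<lambda>i. 0) = R (\<lambda>i. -1 * T1 a f i + (1/2) * T2 s f i)"
            using lmap_lin2[OF good_R_lmap[OF R(1)] Tl, of "-1" "1/2"] by (simp add: vadd_def)
          also have "(\<lambda>i. -1 * T1 a f i + (1/2) * T2 s f i) = (\<lambda>i. f (s2 i) - w2 * f i)"
            by (simp add: U1_def U2_def shift_op_def Lop_def w2_def fun_eq_iff field_simps)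
          finally show "vadd (vadd (\<lambda>i. -1 * R (T1 a f) i) (\<lambda>i. 1/2 * R (T2 s f) i)) (\<lambda>i. 0) = f"
            using R(2) f by simp
        qed
      next
        case False
        hence w2u: "cmod w2 = 1" by simp
        have "w1 * w2 \<noteq> p"
        proof
          assume "w1 * w2 = p"
          hence "x = ((w1 - w2)/2, w1 + w2, w1 * w2)" using x by (simp add: w1_def w2_def)
          thus False using bP_point[OF w1u w2u] nb by simp
        qed
        define c where "c = w1 * w2 - p"
        have c0: "c \<noteq> 0" using \<open>w1 * w2 \<noteq> p\<close> by (simp add: c_def)
        have gl: "good s1 s2 (Lop s2 (\<lambda>x. x) \<alpha> \<beta>)" for \<alpha> \<beta>
          by (rule good_Lop[OF bijs(2) bijs(7)]) simp_all
        show ?thesis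
        proof (rule exact_from_B[OF gl gl gl])
          fix f :: "'k \<Rightarrow> complex" assume f: "f \<in> l2"
          show "vadd (vadd (Lop s2 (\<lambda>x. x) (-1/c) (w1/c) (T1 a f)) (Lop s2 (\<lambda>x. x) (-1/(2*c)) (-w1/(2*c)) (T2 s f)))
                 (Lop s2 (\<lambda>x. x) 0 (1/c) (T3 p f)) = f"
            apply (simp add: U1_def U2_def U3_def shift_op_def Lop_def vadd_def fun_eq_iff)
            using caseC_alg[OF c0 c_def w1_def w2_def] by blast
        qed
      qed
    qed
    with ne show False by simp
  qed
qed

lemma P_unitary: "P_unitary U1 U2 U3"
  unfolding P_unitary_def using normal_U1 normal_U2 normal_U3 comms spectrum by blast

end


section \<open>Extension by zero along an injection\<close>

lemma ext_l2:
  assumes inj: "inj \<iota>" and F1: "\<And>x. F (\<iota> x) = f x" and F0: "\<And>j. j \<notin> range \<iota> \<Longrightarrow> F j = 0"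
  shows "F \<in> l2 \<longleftrightarrow> f \<in> l2" and "l2_norm F = l2_norm f"
proof -
  have a: "(\<lambda>j. (cmod (F j))\<^sup>2) summable_on UNIV \<longleftrightarrow> (\<lambda>j. (cmod (F j))\<^sup>2) summable_on range \<iota>"
    by (rule summable_on_cong_neutral) (auto simp: F0)
  have b: "(\<lambda>j. (cmod (F j))\<^sup>2) summable_on range \<iota> \<longleftrightarrow> (\<lambda>x. (cmod (f x))\<^sup>2) summable_on UNIV"
    using summable_on_reindex[OF inj_on_subset[OF inj subset_UNIV], of "\<lambda>j. (cmod (F j))\<^sup>2"]
    by (simp add: o_def F1)
  show "F \<in> l2 \<longleftrightarrow> f \<in> l2" unfolding l2_iff using a b by simp
  have c: "(\<Sum>\<^sub>\<infinity>j. (cmod (F j))\<^sup>2) = infsum (\<lambda>j. (cmod (F j))\<^sup>2) (range \<iota>)"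
    by (rule infsum_cong_neutral) (auto simp: F0)
  also have "\<dots> = (\<Sum>\<^sub>\<infinity>x. (cmod (f x))\<^sup>2)"
    using infsum_reindex[OF inj_on_subset[OF inj subset_UNIV], of "\<lambda>j. (cmod (F j))\<^sup>2"]
    by (simp add: o_def F1)
  finally show "l2_norm F = l2_norm f" by (simp add: l2_norm_def)
qed

lemma ext_inner:
  assumes inj: "inj \<iota>" and F1: "\<And>x. F (\<iota> x) = f x" and F0: "\<And>j. j \<notin> range \<iota> \<Longrightarrow> F j = 0"
  shows "l2_inner F g = l2_inner f (\<lambda>x. g (\<iota> x))"
proof -
  have "l2_inner F g = infsum (\<lambda>j. F j * cnj (g j)) (range \<iota>)"
    unfolding l2_inner_def by (rule infsum_cong_neutral) (auto simp: F0)
  also have "\<dots> = l2_inner f (\<lambda>x. g (\<iota> x))"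
    using infsum_reindex[OF inj_on_subset[OF inj subset_UNIV], of "\<lambda>j. F j * cnj (g j)"]
    by (simp add: o_def F1 l2_inner_def)
  finally show ?thesis .
qed

lemma restr_l2:
  assumes inj: "inj \<iota>" and f: "f \<in> l2"
  shows "(\<lambda>x. f (\<iota> x)) \<in> l2" and "l2_norm (\<lambda>x. f (\<iota> x)) \<le> l2_norm f"
proof -
  have sf: "(\<lambda>j. (cmod (f j))\<^sup>2) summable_on UNIV" using f by (simp add: l2_iff)
  have sr: "(\<lambda>j. (cmod (f j))\<^sup>2) summable_on range \<iota>" by (rule summable_on_subset_banach[OF sf]) simp
  hence "(\<lambda>x. (cmod (f (\<iota> x)))\<^sup>2) summable_on UNIV"
    using summable_on_reindex[OF inj_on_subset[OF inj subset_UNIV], of "\<lambda>j. (cmod (f j))\<^sup>2"] by (simp add: o_def)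
  thus "(\<lambda>x. f (\<iota> x)) \<in> l2" by (simp add: l2_iff)
  have "(\<Sum>\<^sub>\<infinity>x. (cmod (f (\<iota> x)))\<^sup>2) = infsum (\<lambda>j. (cmod (f j))\<^sup>2) (range \<iota>)"
    using infsum_reindex[OF inj_on_subset[OF inj subset_UNIV], of "\<lambda>j. (cmod (f j))\<^sup>2"] by (simp add: o_def)
  also have "\<dots> \<le> (\<Sum>\<^sub>\<infinity>j. (cmod (f j))\<^sup>2)"
    by (rule infsum_mono_neutral[OF sr sf]) auto
  finally show "l2_norm (\<lambda>x. f (\<iota> x)) \<le> l2_norm f" by (simp add: l2_norm_def)
qed

lemma tail_tendsto:
  fixes h :: "nat \<times> nat \<Rightarrow> real"
  assumes hs: "h summable_on UNIV" and h0: "\<And>p. 0 \<le> h p"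
  shows "(\<lambda>k. infsum h {p. k \<le> fst p}) \<longlonglongrightarrow> 0"
proof (rule LIMSEQ_I)
  fix r :: real assume r: "0 < r"
  define S where "S = infsum h UNIV"
  have "(h has_sum S) UNIV" using hs by (simp add: S_def)
  hence "(sum h \<longlongrightarrow> S) (finite_subsets_at_top UNIV)" by (simp add: has_sum_def)
  hence "\<forall>e>0. \<forall>\<^sub>F F in finite_subsets_at_top UNIV. dist (sum h F) S < e"
    by (simp add: tendsto_iff)
  hence "\<forall>\<^sub>F F in finite_subsets_at_top UNIV. dist (sum h F) S < r/2"
    using r half_gt_zero by blast
  then obtain F0 where F0: "finite F0" "\<And>F. finite F \<Longrightarrow> F0 \<subseteq> F \<Longrightarrow> dist (sum h F) S < r/2"
    unfolding eventually_finite_subsets_at_top by auto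
  define K where "K = Suc (Max (insert 0 (fst ` F0)))"
  have K: "p \<in> F0 \<Longrightarrow> fst p < K" for p
    unfolding K_def using F0(1) by (simp add: le_imp_less_Suc)
  show "\<exists>no. \<forall>n\<ge>no. norm (infsum h {p. n \<le> fst p} - 0) < r"
  proof (intro exI allI impI)
    fix n assume n: "K \<le> n"
    have sub: "h summable_on {p. n \<le> fst p}" by (rule summable_on_subset_banach[OF hs]) simp
    have "infsum h {p. n \<le> fst p} \<le> r/2"
    proof (rule infsum_le_finite_sums[OF sub])
      fix G :: "(nat \<times> nat) set" assume G: "finite G" "G \<subseteq> {p. n \<le> fst p}"
      have disj: "G \<inter> F0 = {}" using G(2) K n by fastforce
      have "sum h (G \<union> F0) \<le> S" unfolding S_def
        by (rule finite_sum_le_infsum[OF hs]) (use G F0 h0 in auto)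
      moreover have "sum h (G \<union> F0) = sum h G + sum h F0" using disj G F0 by (simp add: sum.union_disjoint)
      moreover have "dist (sum h F0) S < r/2" using F0 by blast
      ultimately show "sum h G \<le> r/2" unfolding dist_real_def by linarith
    qed
    moreover have "0 \<le> infsum h {p. n \<le> fst p}" by (rule infsum_nonneg) (simp add: h0)
    ultimately show "norm (infsum h {p. n \<le> fst p} - 0) < r" using r by simp
  qed
qed

section \<open>The Hardy space side\<close>

definition Sback :: "(nat \<times> nat) op" where
  "Sback f = (\<lambda>(m, n). f (m + 1, n + 1))"

definition shp :: "nat \<times> nat \<Rightarrow> nat \<times> nat" where
  "shp = (\<lambda>(m, n). (m + 1, n + 1))"

lemma inj_shp: "inj shp" unfolding shp_def inj_def by auto

lemma V3_eq: "Mz1 (Mz2 f) (shp x) = f x" "j \<notin> range shp \<Longrightarrow> Mz1 (Mz2 f) j = 0"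
proof -
  show "Mz1 (Mz2 f) (shp x) = f x" by (cases x) (simp add: shp_def Mz1_def Mz2_def)
  assume nr: "j \<notin> range shp"
  obtain m n where j: "j = (m, n)" by (cases j)
  show "Mz1 (Mz2 f) j = 0"
  proof (cases "m = 0 \<or> n = 0")
    case True thus ?thesis using j by (auto simp: Mz1_def Mz2_def)
  next
    case False
    hence "j = shp (m - 1, n - 1)" using j by (simp add: shp_def)
    thus ?thesis using nr by blast
  qed
qed

lemma Sback_eq: "Sback f = (\<lambda>x. f (shp x))"
  by (simp add: Sback_def shp_def fun_eq_iff split: prod.splits)

lemma Sback_pow: "(Sback ^^ k) f = (\<lambda>(m, n). f (m + k, n + k))"
  by (induction k arbitrary: f) (simp_all add: Sback_def case_prod_unfold)

lemma Sback_bounded: "bounded_op Sback"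
  unfolding bounded_op_def
proof (intro conjI ballI allI)
  fix f :: "nat \<times> nat \<Rightarrow> complex" assume "f \<in> l2"
  thus "Sback f \<in> l2" unfolding Sback_eq by (rule restr_l2(1)[OF inj_shp])
next
  fix f g :: "nat \<times> nat \<Rightarrow> complex" and c
  show "Sback (\<lambda>i. c * f i + g i) = (\<lambda>i. c * Sback f i + Sback g i)"
    by (simp add: Sback_eq)
next
  show "\<exists>C. \<forall>f\<in>l2. l2_norm (Sback f) \<le> C * l2_norm f"
    by (rule exI[of _ 1]) (simp add: Sback_eq restr_l2(2)[OF inj_shp])
qed

lemma V3_pure: "pure_isometry (\<lambda>f. Mz1 (Mz2 f))"
  unfolding pure_isometry_def isometry_op_def bounded_op_def
proof (intro conjI ballI allI)
  fix f :: "nat \<times> nat \<Rightarrow> complex" assume f: "f \<in> l2"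
  show "Mz1 (Mz2 f) \<in> l2" using ext_l2(1)[where F="Mz1 (Mz2 f)" and f=f, OF inj_shp V3_eq] f by blast
  show "l2_norm (Mz1 (Mz2 f)) = l2_norm f" using ext_l2(2)[where F="Mz1 (Mz2 f)" and f=f, OF inj_shp V3_eq] by blast
next
  fix f g :: "nat \<times> nat \<Rightarrow> complex" and c
  show "Mz1 (Mz2 (\<lambda>i. c * f i + g i)) = (\<lambda>i. c * Mz1 (Mz2 f) i + Mz1 (Mz2 g) i)"
    by (simp add: Mz1_def Mz2_def fun_eq_iff)
next
  show "\<exists>C. \<forall>f\<in>l2. l2_norm (Mz1 (Mz2 f)) \<le> C * l2_norm f"
  proof (rule exI[of _ 1], intro ballI)
    fix f :: "nat \<times> nat \<Rightarrow> complex"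
    show "l2_norm (Mz1 (Mz2 f)) \<le> 1 * l2_norm f"
      using ext_l2(2)[where F="Mz1 (Mz2 f)" and f=f, OF inj_shp V3_eq] by simp
  qed
next
  show "\<exists>S. is_adjoint (\<lambda>f. Mz1 (Mz2 f)) S \<and> (\<forall>f\<in>l2. (\<lambda>n. l2_norm ((S ^^ n) f)) \<longlonglongrightarrow> 0)"
  proof (intro exI conjI ballI)
  show "is_adjoint (\<lambda>f. Mz1 (Mz2 f)) Sback"
    unfolding is_adjoint_def
  proof (intro conjI ballI Sback_bounded)
    fix f g :: "nat \<times> nat \<Rightarrow> complex"
    show "l2_inner (Mz1 (Mz2 f)) g = l2_inner f (Sback g)"
      using ext_inner[where F="Mz1 (Mz2 f)" and f=f, OF inj_shp V3_eq] by (simp add: Sback_eq)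
  qed
  fix f :: "nat \<times> nat \<Rightarrow> complex" assume f: "f \<in> l2"
  define h where "h p = (cmod (f p))\<^sup>2" for p
  have hs: "h summable_on UNIV" using f unfolding l2_iff h_def[abs_def] .
  have bound: "(l2_norm ((Sback ^^ k) f))\<^sup>2 \<le> infsum h {p. k \<le> fst p}" for k
  proof -
    define \<iota> where "\<iota> = (\<lambda>(m::nat, n::nat). (m + k, n + k))"
    have inj: "inj \<iota>" unfolding \<iota>_def inj_def by auto
    have "(l2_norm ((Sback ^^ k) f))\<^sup>2 = (\<Sum>\<^sub>\<infinity>x. h (\<iota> x))"
      unfolding l2_norm_sq Sback_pow h_def \<iota>_def by (simp add: case_prod_unfold)
    also have "\<dots> = infsum h (range \<iota>)"
      using infsum_reindex[OF inj_on_subset[OF inj subset_UNIV], of h] by (simp add: o_def)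
    also have "\<dots> \<le> infsum h {p. k \<le> fst p}"
    proof (rule infsum_mono_neutral)
      show "h summable_on range \<iota>" by (rule summable_on_subset_banach[OF hs]) simp
      show "h summable_on {p. k \<le> fst p}" by (rule summable_on_subset_banach[OF hs]) simp
    qed (auto simp: h_def \<iota>_def)
    finally show ?thesis .
  qed
  have t: "(\<lambda>k. infsum h {p. k \<le> fst p}) \<longlonglongrightarrow> 0" by (rule tail_tendsto[OF hs]) (simp add: h_def)
  have "(\<lambda>k. (l2_norm ((Sback ^^ k) f))\<^sup>2) \<longlonglongrightarrow> 0"
    by (rule tendsto_sandwich[OF _ _ tendsto_const t]) (auto intro: always_eventually bound)
  hence "(\<lambda>k. sqrt ((l2_norm ((Sback ^^ k) f))\<^sup>2)) \<longlonglongrightarrow> sqrt 0"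
    by (rule tendsto_real_sqrt)
  thus "(\<lambda>k. l2_norm ((Sback ^^ k) f)) \<longlonglongrightarrow> 0" by (simp add: l2_norm_nonneg)
qed
qed


definition ee :: "(nat \<times> nat \<Rightarrow> complex) \<Rightarrow> int \<Rightarrow> int \<Rightarrow> complex" where
  "ee f x y = (if 0 \<le> x \<and> 0 \<le> y then f (nat x, nat y) else 0)"

lemma ee_Mz1: "ee f (x - 1) y = ee (Mz1 f) x y"
  by (cases "x \<ge> 1") (auto simp: ee_def Mz1_def nat_diff_distrib)

lemma ee_Mz2: "ee f x (y - 1) = ee (Mz2 f) x y"
  by (cases "y \<ge> 1") (auto simp: ee_def Mz2_def nat_diff_distrib)

theorem mainTheorem13:
  shows "pure_P_isometry_in TYPE(nat)
           (\<lambda>f i. (Mz1 f i - Mz2 f i) / 2)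
           (\<lambda>f i. Mz1 f i + Mz2 f i)
           (\<lambda>f. Mz1 (Mz2 f))"
proof -
  define c :: "nat \<Rightarrow> int \<times> int" where "c = from_nat_into UNIV"
  have "bij_betw c UNIV UNIV" unfolding c_def
    by (rule bij_betw_from_nat_into) (simp_all add: finite_prod)
  hence bc: "bij c" by (simp add: bij_def bij_betw_def)
  define d where "d = inv c"
  have cd[simp]: "c (d x) = x" for x by (simp add: d_def bij_is_surj[OF bc] surj_f_inv_f)
  have dc[simp]: "d (c j) = j" for j by (simp add: d_def bij_is_inj[OF bc] inv_f_f)
  define s1 where "s1 j = d (fst (c j) - 1, snd (c j))" for j
  define s2 where "s2 j = d (fst (c j), snd (c j) - 1)" for j
  define t1 where "t1 j = d (fst (c j) + 1, snd (c j))" for j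
  define t2 where "t2 j = d (fst (c j), snd (c j) + 1)" for j
  interpret Z: twoshift s1 s2 t1 t2
    by unfold_locales (simp_all add: s1_def s2_def t1_def t2_def)
  define E where "E f j = ee f (fst (c j)) (snd (c j))" for f j
  define \<iota> where "\<iota> = (\<lambda>(m::nat, n::nat). d (int m, int n))"
  have inj: "inj \<iota>"
  proof (rule injI)
    fix x y assume "\<iota> x = \<iota> y"
    hence "c (\<iota> x) = c (\<iota> y)" by simp
    thus "x = y" by (cases x, cases y) (simp add: \<iota>_def)
  qed
  have E1: "E f (\<iota> x) = f x" for f x by (cases x) (simp add: E_def \<iota>_def ee_def)
  have E0: "E f j = 0" if "j \<notin> range \<iota>" for f j
  proof (rule ccontr)
    assume "E f j \<noteq> 0"
    hence nn: "0 \<le> fst (c j)" "0 \<le> snd (c j)" by (auto simp: E_def ee_def split: if_splits)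
    have "j = \<iota> (nat (fst (c j)), nat (snd (c j)))"
      using nn by (simp add: \<iota>_def)
    thus False using that by blast
  qed
  have Es1: "E f (s1 j) = E (Mz1 f) j" for f j by (simp add: E_def s1_def ee_Mz1)
  have Es2: "E f (s2 j) = E (Mz2 f) j" for f j by (simp add: E_def s2_def ee_Mz2)
  have P: "P_isometry_in TYPE(nat) (\<lambda>f i. (Mz1 f i - Mz2 f i) / 2) (\<lambda>f i. Mz1 f i + Mz2 f i)
           (\<lambda>f. Mz1 (Mz2 f))"
    unfolding P_isometry_in_def
  proof (intro exI conjI ballI allI)
    show "P_unitary Z.U1 Z.U2 Z.U3" by (rule Z.P_unitary)
    fix f :: "nat \<times> nat \<Rightarrow> complex" assume f: "f \<in> l2"
    show "E f \<in> l2" using ext_l2(1)[where F="E f" and f=f, OF inj E1 E0] f by blast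
    show "l2_norm (E f) = l2_norm f" using ext_l2(2)[where F="E f" and f=f, OF inj E1 E0] by blast
    show "Z.U1 (E f) = E (\<lambda>i. (Mz1 f i - Mz2 f i) / 2)"
      by (simp add: Z.U1_def Lop_def fun_eq_iff Es1 Es2) (simp add: E_def ee_def diff_divide_distrib)
    show "Z.U2 (E f) = E (\<lambda>i. Mz1 f i + Mz2 f i)"
      by (simp add: Z.U2_def Lop_def fun_eq_iff Es1 Es2) (simp add: E_def ee_def algebra_simps)
    show "Z.U3 (E f) = E (Mz1 (Mz2 f))"
      by (simp add: Z.U3_def Lop_def fun_eq_iff Es1 Es2)
  next
    fix f g :: "nat \<times> nat \<Rightarrow> complex" and a
    show "E (\<lambda>i. a * f i + g i) = (\<lambda>i. a * E f i + E g i)"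
      by (simp add: E_def ee_def fun_eq_iff)
  qed
  show ?thesis unfolding pure_P_isometry_in_def using P V3_pure by blast
qed

end
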